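(* Let $(M^n,c,v^m d\nu)$ be a smooth conformal measure space with characteristic constant $\mu$, $n\ge3$, $m\in\mathbb{R}\setminus\{-n,1-n,2-n\}$, and let $\mathcal{R}^W$ be the curvature of $\nabla^W$, $\mathcal{R}^W(x,z)I=-\nabla^W_x\nabla^W_zI+\nabla^W_z\nabla^W_xI+\nabla^W_{[x,z]}I$. In any scale $g\in c$, for a tractor $I$ with top component $\sigma$, middle $\omega$, bottom $\rho$, the tractor $\mathcal{R}^W(x,z)I$ has top component $0$, middle component $A^W(x,z,\omega,\cdot)^\sharp-\sigma\,dP^W(x,z)$, and bottom component $dP^W(x,z)(\omega)$.
   Context: Conformal setting: $(M^n,c)$ a manifold with a conformal class of Riemannian metrics; $\mathcal{E}[w]$ conformal densities of weight $w$ (functions in a scale $g\in c$, multiplied by $e^{ws}$ under $g\mapsto e^{2s}g$). Standard tractor bundle $\mathbb{T}\cong\mathbb{R}\oplus TM\oplus\mathbb{R}$ in a scale, tractors written with top $\sigma$, middle $\omega$, bottom $\rho$, transforming by $\sigma\mapsto e^{s}\sigma$, $\omega\mapsto e^{-s}(\omega+\sigma\nabla s)$, $\rho\mapsto e^{-s}(\rho-g(\nabla s,\omega)-\tfrac12|\nabla s|^2\sigma)$. Tractor metric $\langle I,I\rangle=2\sigma\rho+|\omega|^2$; $X$ has bottom component $1$, others $0$. $\mathbb{D}v$ for $v\in\mathcal{E}[1]$: top $(n)v$, middle $n\nabla v$, bottom $-(\Delta v+\mathrm{J}v)$, $\mathrm{J}$ the trace of the Schouten tensor. SCMS: positive $v\in\mathcal{E}[1]$,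 $m\in\mathbb{R}$, fixed constant $\mu$. In a scale, $\mathrm{Ric}^m_\phi=\mathrm{Ric}-mv^{-1}\nabla^2v$, $R^m_\phi=R-2mv^{-1}\Delta v-m(m-1)v^{-2}|\nabla v|^2$, $\mathrm{J}^W=\frac{1}{2(m+n-1)}(R^m_\phi+m\mu v^{-2})$, $P^W=\frac{1}{m+n-2}(\mathrm{Ric}^m_\phi-\mathrm{J}^Wg)$. The $W$-tractor connection: $\nabla^W_xI$ has top $x\sigma-g(\omega,x)$, middle $\nabla_x\omega+\sigma P^W(x)+\rho x$ ($P^W(x)$ dual to $P^W(x,\cdot)$), bottom $x\rho-P^W(x,\omega)$; this is a connection on $\mathbb{T}$ independent of scale. Curvature conventions: $\mathrm{Rm}(x,z,y,w)=g(-\nabla_x\nabla_zy+\nabla_z\nabla_xy+\nabla_{[x,z]}y,w)$ (so $\mathrm{Ric}(x,z)=\sum_i\mathrm{Rm}(e_i,x,e_i,z)$). Kulkarni–Nomizu product: $(h\wedge k)(x,z,y,w)=h(x,y)k(z,w)+h(z,w)k(x,y)-h(x,w)k(z,y)-h(z,y)k(x,w)$. Weighted Weyl tensor $A^W=\mathrm{Rm}-P^W\wedge g$. $dP^W(x,z)=(\nabla_xP^W)(z,\cdot)-(\nabla_zP^W)(x,\cdot)$, a one-form (identified with a vector via $g$). *)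

theory Defs
  imports "HOL-Analysis.Analysis"
begin

text \<open>Local coordinate model: a scale g of the conformal class is a Riemannian metric on an
open set U of real^'n, given by its matrix of components G p (a symmetric positive definite
matrix at each p in U).  Vector fields are maps U -> real^'n, densities are real functions
(trivialised by the scale).\<close>

definition pd :: "'n::finite \<Rightarrow> (real^'n \<Rightarrow> 'b::real_normed_vector) \<Rightarrow> real^'n \<Rightarrow> 'b" where
  "pd i f p = frechet_derivative f (at p) (axis i 1)"

fun C_k :: "nat \<Rightarrow> (real^'n::finite \<Rightarrow> 'b::real_normed_vector) \<Rightarrow> (real^'n) set \<Rightarrow> bool" where
  "C_k 0 f U = continuous_on U f"
| "C_k (Suc k) f U = ((\<forall>p\<in>U. f differentiable (at p)) \<and> (\<forall>i. C_k k (pd i f) U))"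

definition smooth_on :: "(real^'n::finite) set \<Rightarrow> (real^'n \<Rightarrow> 'b::real_normed_vector) \<Rightarrow> bool" where
  "smooth_on U f = (\<forall>k. C_k k f U)"

definition riemannian_metric_on :: "(real^'n::finite) set \<Rightarrow> (real^'n \<Rightarrow> real^'n^'n) \<Rightarrow> bool" where
  "riemannian_metric_on U G = (smooth_on U G \<and>
     (\<forall>p\<in>U. transpose (G p) = G p \<and> (\<forall>a. a \<noteq> 0 \<longrightarrow> a \<bullet> (G p *v a) > 0)))"

definition gm :: "(real^'n::finite \<Rightarrow> real^'n^'n) \<Rightarrow> real^'n \<Rightarrow> real^'n \<Rightarrow> real^'n \<Rightarrow> real" where
  "gm G p a b = a \<bullet> (G p *v b)"

definition Gi :: "(real^'n::finite \<Rightarrow> real^'n^'n) \<Rightarrow> real^'n \<Rightarrow> real^'n^'n" where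
  "Gi G p = matrix_inv (G p)"

definition sharp :: "(real^'n::finite \<Rightarrow> real^'n^'n) \<Rightarrow> real^'n \<Rightarrow> (real^'n \<Rightarrow> real) \<Rightarrow> real^'n" where
  "sharp G p alpha = Gi G p *v (\<chi> b. alpha (axis b 1))"

definition chr :: "(real^'n::finite \<Rightarrow> real^'n^'n) \<Rightarrow> 'n \<Rightarrow> 'n \<Rightarrow> 'n \<Rightarrow> real^'n \<Rightarrow> real" where
  "chr G k i j p = (1/2) * (\<Sum>l\<in>UNIV. Gi G p $ k $ l *
      (pd i (\<lambda>q. G q $ j $ l) p + pd j (\<lambda>q. G q $ i $ l) p - pd l (\<lambda>q. G q $ i $ j) p))"

definition dirf :: "(real^'n::finite \<Rightarrow> real^'n) \<Rightarrow> (real^'n \<Rightarrow> real) \<Rightarrow> real^'n \<Rightarrow> real" where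
  "dirf X f p = (\<Sum>i\<in>UNIV. X p $ i * pd i f p)"

definition covd :: "(real^'n::finite \<Rightarrow> real^'n^'n) \<Rightarrow> (real^'n \<Rightarrow> real^'n) \<Rightarrow> (real^'n \<Rightarrow> real^'n) \<Rightarrow> real^'n \<Rightarrow> real^'n" where
  "covd G X Y p = (\<chi> k. dirf X (\<lambda>q. Y q $ k) p + (\<Sum>i\<in>UNIV. \<Sum>j\<in>UNIV. chr G k i j p * X p $ i * Y p $ j))"

definition lie :: "(real^'n::finite \<Rightarrow> real^'n) \<Rightarrow> (real^'n \<Rightarrow> real^'n) \<Rightarrow> real^'n \<Rightarrow> real^'n" where
  "lie X Z p = (\<chi> k. dirf X (\<lambda>q. Z q $ k) p - dirf Z (\<lambda>q. X q $ k) p)"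

definition rmvec :: "(real^'n::finite \<Rightarrow> real^'n^'n) \<Rightarrow> (real^'n \<Rightarrow> real^'n) \<Rightarrow> (real^'n \<Rightarrow> real^'n) \<Rightarrow> (real^'n \<Rightarrow> real^'n) \<Rightarrow> real^'n \<Rightarrow> real^'n" where
  "rmvec G X Z Y p = - covd G X (covd G Z Y) p + covd G Z (covd G X Y) p + covd G (lie X Z) Y p"

definition Rm :: "(real^'n::finite \<Rightarrow> real^'n^'n) \<Rightarrow> (real^'n \<Rightarrow> real^'n) \<Rightarrow> (real^'n \<Rightarrow> real^'n) \<Rightarrow> (real^'n \<Rightarrow> real^'n) \<Rightarrow> real^'n \<Rightarrow> real^'n \<Rightarrow> real" where
  "Rm G X Z Y p w = gm G p (rmvec G X Z Y p) w"

text \<open>Ricci tensor components Ric_ab = tr_g Rm(., d_a, ., d_b) (trace over the first and third slots).\<close>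
definition Ric :: "(real^'n::finite \<Rightarrow> real^'n^'n) \<Rightarrow> 'n \<Rightarrow> 'n \<Rightarrow> real^'n \<Rightarrow> real" where
  "Ric G a b p = (\<Sum>i\<in>UNIV. \<Sum>j\<in>UNIV. Gi G p $ i $ j *
      Rm G (\<lambda>_. axis i 1) (\<lambda>_. axis a 1) (\<lambda>_. axis j 1) p (axis b 1))"

definition scal :: "(real^'n::finite \<Rightarrow> real^'n^'n) \<Rightarrow> real^'n \<Rightarrow> real" where
  "scal G p = (\<Sum>a\<in>UNIV. \<Sum>b\<in>UNIV. Gi G p $ a $ b * Ric G a b p)"

definition hess :: "(real^'n::finite \<Rightarrow> real^'n^'n) \<Rightarrow> (real^'n \<Rightarrow> real) \<Rightarrow> 'n \<Rightarrow> 'n \<Rightarrow> real^'n \<Rightarrow> real" where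
  "hess G f a b p = pd a (pd b f) p - (\<Sum>k\<in>UNIV. chr G k a b p * pd k f p)"

definition lap :: "(real^'n::finite \<Rightarrow> real^'n^'n) \<Rightarrow> (real^'n \<Rightarrow> real) \<Rightarrow> real^'n \<Rightarrow> real" where
  "lap G f p = (\<Sum>a\<in>UNIV. \<Sum>b\<in>UNIV. Gi G p $ a $ b * hess G f a b p)"

definition gradsq :: "(real^'n::finite \<Rightarrow> real^'n^'n) \<Rightarrow> (real^'n \<Rightarrow> real) \<Rightarrow> real^'n \<Rightarrow> real" where
  "gradsq G f p = (\<Sum>a\<in>UNIV. \<Sum>b\<in>UNIV. Gi G p $ a $ b * pd a f p * pd b f p)"

definition Ricm :: "(real^'n::finite \<Rightarrow> real^'n^'n) \<Rightarrow> (real^'n \<Rightarrow> real) \<Rightarrow> real \<Rightarrow> 'n \<Rightarrow> 'n \<Rightarrow> real^'n \<Rightarrow> real" where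
  "Ricm G v m a b p = Ric G a b p - m / v p * hess G v a b p"

definition Rscm :: "(real^'n::finite \<Rightarrow> real^'n^'n) \<Rightarrow> (real^'n \<Rightarrow> real) \<Rightarrow> real \<Rightarrow> real^'n \<Rightarrow> real" where
  "Rscm G v m p = scal G p - 2 * m / v p * lap G v p - m * (m - 1) / (v p)^2 * gradsq G v p"

definition JW :: "(real^'n::finite \<Rightarrow> real^'n^'n) \<Rightarrow> (real^'n \<Rightarrow> real) \<Rightarrow> real \<Rightarrow> real \<Rightarrow> real^'n \<Rightarrow> real" where
  "JW G v m mu p = (Rscm G v m p + m * mu / (v p)^2) / (2 * (m + real CARD('n) - 1))"

definition PWc :: "(real^'n::finite \<Rightarrow> real^'n^'n) \<Rightarrow> (real^'n \<Rightarrow> real) \<Rightarrow> real \<Rightarrow> real \<Rightarrow> 'n \<Rightarrow> 'n \<Rightarrow> real^'n \<Rightarrow> real" where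
  "PWc G v m mu a b p = (Ricm G v m a b p - JW G v m mu p * G p $ a $ b) / (m + real CARD('n) - 2)"

definition PW :: "(real^'n::finite \<Rightarrow> real^'n^'n) \<Rightarrow> (real^'n \<Rightarrow> real) \<Rightarrow> real \<Rightarrow> real \<Rightarrow> real^'n \<Rightarrow> real^'n \<Rightarrow> real^'n \<Rightarrow> real" where
  "PW G v m mu p x y = (\<Sum>a\<in>UNIV. \<Sum>b\<in>UNIV. x $ a * y $ b * PWc G v m mu a b p)"

definition covPWc :: "(real^'n::finite \<Rightarrow> real^'n^'n) \<Rightarrow> (real^'n \<Rightarrow> real) \<Rightarrow> real \<Rightarrow> real \<Rightarrow> 'n \<Rightarrow> 'n \<Rightarrow> 'n \<Rightarrow> real^'n \<Rightarrow> real" where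
  "covPWc G v m mu i j k p = pd i (PWc G v m mu j k) p
     - (\<Sum>l\<in>UNIV. chr G l i j p * PWc G v m mu l k p)
     - (\<Sum>l\<in>UNIV. chr G l i k p * PWc G v m mu j l p)"

definition dPW :: "(real^'n::finite \<Rightarrow> real^'n^'n) \<Rightarrow> (real^'n \<Rightarrow> real) \<Rightarrow> real \<Rightarrow> real \<Rightarrow> real^'n \<Rightarrow> real^'n \<Rightarrow> real^'n \<Rightarrow> real^'n \<Rightarrow> real" where
  "dPW G v m mu p x z w = (\<Sum>i\<in>UNIV. \<Sum>j\<in>UNIV. \<Sum>k\<in>UNIV.
      x $ i * z $ j * w $ k * (covPWc G v m mu i j k p - covPWc G v m mu j i k p))"

definition KN_PW_g :: "(real^'n::finite \<Rightarrow> real^'n^'n) \<Rightarrow> (real^'n \<Rightarrow> real) \<Rightarrow> real \<Rightarrow> real \<Rightarrow> real^'n \<Rightarrow> real^'n \<Rightarrow> real^'n \<Rightarrow> real^'n \<Rightarrow> real^'n \<Rightarrow> real" where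
  "KN_PW_g G v m mu p x z y w =
     PW G v m mu p x y * gm G p z w + PW G v m mu p z w * gm G p x y
   - PW G v m mu p x w * gm G p z y - PW G v m mu p z y * gm G p x w"

definition AW :: "(real^'n::finite \<Rightarrow> real^'n^'n) \<Rightarrow> (real^'n \<Rightarrow> real) \<Rightarrow> real \<Rightarrow> real \<Rightarrow> (real^'n \<Rightarrow> real^'n) \<Rightarrow> (real^'n \<Rightarrow> real^'n) \<Rightarrow> (real^'n \<Rightarrow> real^'n) \<Rightarrow> real^'n \<Rightarrow> real^'n \<Rightarrow> real" where
  "AW G v m mu X Z Y p w = Rm G X Z Y p w - KN_PW_g G v m mu p (X p) (Z p) (Y p) w"

text \<open>A section of the standard tractor bundle, written in the scale g as (top, middle, bottom).\<close>
type_synonym 'n tractor = "(real^'n \<Rightarrow> real) \<times> (real^'n \<Rightarrow> real^'n) \<times> (real^'n \<Rightarrow> real)"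

definition ttop :: "('n::finite) tractor \<Rightarrow> real^'n \<Rightarrow> real" where "ttop I = fst I"
definition tmid :: "('n::finite) tractor \<Rightarrow> real^'n \<Rightarrow> real^'n" where "tmid I = fst (snd I)"
definition tbot :: "('n::finite) tractor \<Rightarrow> real^'n \<Rightarrow> real" where "tbot I = snd (snd I)"

definition PWvec :: "(real^'n::finite \<Rightarrow> real^'n^'n) \<Rightarrow> (real^'n \<Rightarrow> real) \<Rightarrow> real \<Rightarrow> real \<Rightarrow> real^'n \<Rightarrow> real^'n \<Rightarrow> real^'n" where
  "PWvec G v m mu p x = sharp G p (PW G v m mu p x)"

definition nablaW :: "(real^'n::finite \<Rightarrow> real^'n^'n) \<Rightarrow> (real^'n \<Rightarrow> real) \<Rightarrow> real \<Rightarrow> real \<Rightarrow> (real^'n \<Rightarrow> real^'n) \<Rightarrow> 'n tractor \<Rightarrow> 'n tractor" where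
  "nablaW G v m mu X I =
    ((\<lambda>p. dirf X (ttop I) p - gm G p (tmid I p) (X p)),
     (\<lambda>p. covd G X (tmid I) p + ttop I p *\<^sub>R PWvec G v m mu p (X p) + tbot I p *\<^sub>R X p),
     (\<lambda>p. dirf X (tbot I) p - PW G v m mu p (X p) (tmid I p)))"

definition tadd :: "('n::finite) tractor \<Rightarrow> 'n tractor \<Rightarrow> 'n tractor" where
  "tadd I J = ((\<lambda>p. ttop I p + ttop J p), (\<lambda>p. tmid I p + tmid J p), (\<lambda>p. tbot I p + tbot J p))"

definition tneg :: "('n::finite) tractor \<Rightarrow> 'n tractor" where
  "tneg I = ((\<lambda>p. - ttop I p), (\<lambda>p. - tmid I p), (\<lambda>p. - tbot I p))"

definition curvW :: "(real^'n::finite \<Rightarrow> real^'n^'n) \<Rightarrow> (real^'n \<Rightarrow> real) \<Rightarrow> real \<Rightarrow> real \<Rightarrow> (real^'n \<Rightarrow> real^'n) \<Rightarrow> (real^'n \<Rightarrow> real^'n) \<Rightarrow> 'n tractor \<Rightarrow> 'n tractor" where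
  "curvW G v m mu X Z I =
     tadd (tadd (tneg (nablaW G v m mu X (nablaW G v m mu Z I))) (nablaW G v m mu Z (nablaW G v m mu X I)))
          (nablaW G v m mu (lie X Z) I)"

end

theory Submission
  imports Defs
begin

lemma C_k_mono: "C_k (Suc k) f U \<Longrightarrow> C_k k f U"
proof (induction k arbitrary: f)
  case 0
  then show ?case
    by (auto intro!: continuous_at_imp_continuous_on differentiable_imp_continuous_within)
next
  case (Suc k)
  then show ?case by auto
qed

lemma diff_cong_open:
  assumes "f differentiable (at p)" "open U" "p \<in> U" "\<forall>q\<in>U. f q = g q"
  shows "g differentiable (at p)"
proof -
  obtain f' where "(f has_derivative f') (at p)" using assms(1) unfolding differentiable_def by blast
  then have "(g has_derivative f') (at p)"
    by (rule has_derivative_transform_within_open[OF _ assms(2,3)]) (use assms(4) in auto)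
  then show ?thesis unfolding differentiable_def by blast
qed

lemma pd_cong_open:
  assumes "f differentiable (at p)" "open U" "p \<in> U" "\<forall>q\<in>U. f q = g q"
  shows "pd i f p = pd i g p"
  unfolding pd_def using frechet_derivative_transform_within_open[OF assms(1,2,3)] assms(4) by simp

lemma C_k_cong:
  assumes "open U" "\<forall>q\<in>U. f q = g q" "C_k k f U"
  shows "C_k k g U"
  using assms(2,3)
proof (induction k arbitrary: f g)
  case 0
  then show ?case using continuous_on_cong by force
next
  case (Suc k)
  have d: "\<forall>p\<in>U. f differentiable (at p)" and c: "\<forall>i. C_k k (pd i f) U" using Suc.prems by auto
  have dg: "\<forall>p\<in>U. g differentiable (at p)"
    using d Suc.prems(1) assms(1) diff_cong_open by blast
  have "\<forall>q\<in>U. pd i f q = pd i g q" for i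
    using d Suc.prems(1) assms(1) pd_cong_open by blast
  then have "C_k k (pd i g) U" for i using c Suc.IH by blast
  then show ?case using dg by simp
qed


lemma C_k_cong2: "open U \<Longrightarrow> C_k k f U \<Longrightarrow> (\<And>q. q\<in>U \<Longrightarrow> g q = f q) \<Longrightarrow> C_k k g U"
  using C_k_cong[of U f g k] by auto

lemma smooth_cong: "open U \<Longrightarrow> (\<And>q. q\<in>U \<Longrightarrow> f q = g q) \<Longrightarrow> smooth_on U f \<Longrightarrow> smooth_on U g"
  unfolding smooth_on_def using C_k_cong by blast

lemma smooth_pd: "smooth_on U f \<Longrightarrow> smooth_on U (pd i f)"
  unfolding smooth_on_def by (metis C_k.simps(2))

lemma smooth_diff: "smooth_on U f \<Longrightarrow> q \<in> U \<Longrightarrow> f differentiable (at q)"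
  unfolding smooth_on_def by (metis C_k.simps(2))

lemma smooth_cont: "smooth_on U f \<Longrightarrow> continuous_on U f"
  unfolding smooth_on_def by (metis C_k.simps(1))

lemma pd_linear:
  assumes "bounded_linear L" "f differentiable (at q)"
  shows "pd i (\<lambda>x. L (f x)) q = L (pd i f q)"
proof -
  have "(f has_derivative frechet_derivative f (at q)) (at q)"
    using assms(2) frechet_derivative_works by blast
  then have "((\<lambda>x. L (f x)) has_derivative (\<lambda>h. L (frechet_derivative f (at q) h))) (at q)"
    using bounded_linear.has_derivative[OF assms(1)] by blast
  then have "frechet_derivative (\<lambda>x. L (f x)) (at q) = (\<lambda>h. L (frechet_derivative f (at q) h))" by (rule frechet_derivative_at[symmetric])
  then show ?thesis unfolding pd_def by simp
qed

lemma diff_linear: "bounded_linear L \<Longrightarrow> f differentiable (at q) \<Longrightarrow> (\<lambda>x. L (f x)) differentiable (at q)"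
  using bounded_linear.has_derivative unfolding differentiable_def by blast

lemma C_k_linear: "open U \<Longrightarrow> bounded_linear L \<Longrightarrow> C_k k f U \<Longrightarrow> C_k k (\<lambda>x. L (f x)) U"
proof (induction k arbitrary: f)
  case 0
  then show ?case
    by (auto intro: continuous_on_compose2[of UNIV L] linear_continuous_on)
next
  case (Suc k)
  have d: "\<forall>p\<in>U. f differentiable (at p)" and c: "\<forall>i. C_k k (pd i f) U" using Suc.prems by auto
  have "\<forall>p\<in>U. (\<lambda>x. L (f x)) differentiable (at p)"
    using d Suc.prems(2) diff_linear by blast
  moreover have "C_k k (pd i (\<lambda>x. L (f x))) U" for i
  proof -
    have "C_k k (\<lambda>x. L (pd i f x)) U" using Suc.IH[OF Suc.prems(1,2)] c by blast
    then show ?thesis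
      by (rule C_k_cong2[OF Suc.prems(1)]) (use pd_linear[OF Suc.prems(2)] d in auto)
  qed
  ultimately show ?case by simp
qed

lemma smooth_linear: "open U \<Longrightarrow> bounded_linear L \<Longrightarrow> smooth_on U f \<Longrightarrow> smooth_on U (\<lambda>x. L (f x))"
  unfolding smooth_on_def using C_k_linear by blast

lemma smooth_nth: "open U \<Longrightarrow> smooth_on U f \<Longrightarrow> smooth_on U (\<lambda>x. f x $ j)"
  using smooth_linear[OF _ bounded_linear_vec_nth] by blast

lemma pd_nth: "f differentiable (at q) \<Longrightarrow> pd i (\<lambda>x. f x $ j) q = pd i f q $ j"
  using pd_linear[OF bounded_linear_vec_nth] by blast

lemma pd_add:
  assumes "f differentiable (at q)" "g differentiable (at q)"
  shows "pd i (\<lambda>x. f x + g x) q = pd i f q + pd i g q"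
proof -
  have "((\<lambda>x. f x + g x) has_derivative (\<lambda>h. frechet_derivative f (at q) h + frechet_derivative g (at q) h)) (at q)"
    using assms frechet_derivative_works has_derivative_add by blast
  then have "frechet_derivative (\<lambda>x. f x + g x) (at q) = (\<lambda>h. frechet_derivative f (at q) h + frechet_derivative g (at q) h)" by (rule frechet_derivative_at[symmetric])
  then show ?thesis unfolding pd_def by simp
qed

lemma pd_mult:
  fixes f g :: "real^'n::finite \<Rightarrow> real"
  assumes "f differentiable (at q)" "g differentiable (at q)"
  shows "pd i (\<lambda>x. f x * g x) q = pd i f q * g q + f q * pd i g q"
proof -
  have "((\<lambda>x. f x * g x) has_derivative (\<lambda>h. f q * frechet_derivative g (at q) h + frechet_derivative f (at q) h * g q)) (at q)"
    using assms frechet_derivative_works has_derivative_mult by blast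
  then have "frechet_derivative (\<lambda>x. f x * g x) (at q) = (\<lambda>h. f q * frechet_derivative g (at q) h + frechet_derivative f (at q) h * g q)" by (rule frechet_derivative_at[symmetric])
  then show ?thesis unfolding pd_def by simp
qed

lemma pd_const: "pd i (\<lambda>x. c) q = 0"
  unfolding pd_def by simp

lemma pd_inverse:
  fixes f :: "real^'n::finite \<Rightarrow> real"
  assumes "f differentiable (at q)" "f q \<noteq> 0"
  shows "pd i (\<lambda>x. inverse (f x)) q = - (inverse (f q) * pd i f q * inverse (f q))"
proof -
  have "((\<lambda>x. inverse (f x)) has_derivative (\<lambda>h. - (inverse (f q) * frechet_derivative f (at q) h * inverse (f q)))) (at q)"
    by (rule Deriv.has_derivative_inverse[where f=f and x=q, OF assms(2)]) (use assms(1) frechet_derivative_works in blast)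
  then have "frechet_derivative (\<lambda>x. inverse (f x)) (at q) = (\<lambda>h. - (inverse (f q) * frechet_derivative f (at q) h * inverse (f q)))" by (rule frechet_derivative_at[symmetric])
  then show ?thesis unfolding pd_def by simp
qed

lemma C_k_add: "open U \<Longrightarrow> C_k k f U \<Longrightarrow> C_k k g U \<Longrightarrow> C_k k (\<lambda>x. f x + g x) U"
proof (induction k arbitrary: f g)
  case 0
  then show ?case by (auto intro: continuous_on_add)
next
  case (Suc k)
  have d: "\<forall>p\<in>U. f differentiable (at p)" "\<forall>p\<in>U. g differentiable (at p)"
    and c: "\<forall>i. C_k k (pd i f) U" "\<forall>i. C_k k (pd i g) U" using Suc.prems by auto
  have "C_k k (pd i (\<lambda>x. f x + g x)) U" for i
    by (rule C_k_cong2[OF Suc.prems(1) Suc.IH[OF Suc.prems(1) c(1)[rule_format] c(2)[rule_format]]])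
       (use pd_add[of f _ g i] d in auto)
  then show ?case using d by (simp add: differentiable_add)
qed

lemma pd_const_fun: "pd i (\<lambda>x. c) = (\<lambda>x. 0)"
  by (simp add: pd_def fun_eq_iff)

lemma C_k_const: "C_k k (\<lambda>x. c) U"
  by (induction k arbitrary: c) (auto simp: pd_const_fun)

lemma C_k_mult:
  fixes f g :: "real^'n::finite \<Rightarrow> real"
  shows "open U \<Longrightarrow> C_k k f U \<Longrightarrow> C_k k g U \<Longrightarrow> C_k k (\<lambda>x. f x * g x) U"
proof (induction k arbitrary: f g)
  case 0
  then show ?case by (auto intro: continuous_on_mult)
next
  case (Suc k)
  have d: "\<forall>p\<in>U. f differentiable (at p)" "\<forall>p\<in>U. g differentiable (at p)"
    and c: "\<forall>i. C_k k (pd i f) U" "\<forall>i. C_k k (pd i g) U" using Suc.prems by auto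
  have f: "C_k k f U" "C_k k g U" using Suc.prems C_k_mono by blast+
  have "C_k k (pd i (\<lambda>x. f x * g x)) U" for i
  proof -
    have "C_k k (\<lambda>x. pd i f x * g x + f x * pd i g x) U"
      using C_k_add[OF Suc.prems(1) Suc.IH[OF Suc.prems(1) c(1)[rule_format] f(2)] Suc.IH[OF Suc.prems(1) f(1) c(2)[rule_format]]] .
    then show ?thesis by (rule C_k_cong2[OF Suc.prems(1)]) (use pd_mult[of f _ g i] d in auto)
  qed
  moreover have "\<forall>p\<in>U. (\<lambda>x. f x * g x) differentiable (at p)"
    using d by (auto intro: differentiable_mult)
  ultimately show ?case by (simp only: C_k.simps) blast
qed

lemma C_k_inverse:
  fixes f :: "real^'n::finite \<Rightarrow> real"
  shows "open U \<Longrightarrow> \<forall>x\<in>U. f x \<noteq> 0 \<Longrightarrow> C_k k f U \<Longrightarrow> C_k k (\<lambda>x. inverse (f x)) U"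
proof (induction k arbitrary: f)
  case 0
  then show ?case by (auto intro: continuous_on_inverse)
next
  case (Suc k)
  have d: "\<forall>p\<in>U. f differentiable (at p)" and c: "\<forall>i. C_k k (pd i f) U" using Suc.prems by auto
  have f: "C_k k f U" using Suc.prems C_k_mono by blast
  have I: "C_k k (\<lambda>x. inverse (f x)) U" using Suc.IH[OF Suc.prems(1,2) f] .
  have "C_k k (pd i (\<lambda>x. inverse (f x))) U" for i
  proof -
    have "C_k k (\<lambda>x. - (inverse (f x) * pd i f x * inverse (f x))) U"
      using C_k_linear[OF Suc.prems(1) bounded_linear_minus[OF bounded_linear_ident],
          OF C_k_mult[OF Suc.prems(1) C_k_mult[OF Suc.prems(1) I c[rule_format]] I]] by simp
    then show ?thesis by (rule C_k_cong2[OF Suc.prems(1)]) (use pd_inverse[of f _ i] d Suc.prems(2) in auto)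
  qed
  moreover have "\<forall>p\<in>U. (\<lambda>x. inverse (f x)) differentiable (at p)"
    using d Suc.prems(2) by (auto intro: differentiable_inverse)
  ultimately show ?case by (simp only: C_k.simps) blast
qed

lemma smooth_add: "open U \<Longrightarrow> smooth_on U f \<Longrightarrow> smooth_on U g \<Longrightarrow> smooth_on U (\<lambda>x. f x + g x)"
  unfolding smooth_on_def using C_k_add by blast
lemma smooth_const: "smooth_on U (\<lambda>x. c)"
  unfolding smooth_on_def using C_k_const by blast
lemma smooth_mult: "open U \<Longrightarrow> smooth_on U f \<Longrightarrow> smooth_on U g \<Longrightarrow> smooth_on U (\<lambda>x. f x * g x :: real)"
  unfolding smooth_on_def using C_k_mult by blast
lemma smooth_inverse: "open U \<Longrightarrow> \<forall>x\<in>U. f x \<noteq> 0 \<Longrightarrow> smooth_on U f \<Longrightarrow> smooth_on U (\<lambda>x. inverse (f x) :: real)"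
  unfolding smooth_on_def using C_k_inverse by blast
lemma smooth_uminus: "open U \<Longrightarrow> smooth_on U f \<Longrightarrow> smooth_on U (\<lambda>x. - f x)"
  using smooth_linear[OF _ bounded_linear_minus[OF bounded_linear_ident]] by auto
lemma smooth_minus: "open U \<Longrightarrow> smooth_on U f \<Longrightarrow> smooth_on U g \<Longrightarrow> smooth_on U (\<lambda>x. f x - g x)"
  using smooth_add[of U f "\<lambda>x. - g x"] smooth_uminus by auto
lemma smooth_divide: "open U \<Longrightarrow> \<forall>x\<in>U. g x \<noteq> 0 \<Longrightarrow> smooth_on U f \<Longrightarrow> smooth_on U g \<Longrightarrow> smooth_on U (\<lambda>x. f x / g x :: real)"
  using smooth_mult[of U f "\<lambda>x. inverse (g x)"] smooth_inverse by (auto simp: divide_inverse)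
lemma smooth_sum: "open U \<Longrightarrow> (\<And>a. a \<in> A \<Longrightarrow> smooth_on U (F a)) \<Longrightarrow> smooth_on U (\<lambda>x. \<Sum>a\<in>A. F a x)"
proof (induction A rule: infinite_finite_induct)
  case (infinite A) then show ?case by (simp add: smooth_const)
next
  case empty then show ?case by (simp add: smooth_const)
next
  case (insert a A)
  have e: "(\<lambda>x. \<Sum>a\<in>insert a A. F a x) = (\<lambda>x. F a x + (\<Sum>a\<in>A. F a x))" using insert.hyps by simp
  have "smooth_on U (\<lambda>x. F a x + (\<Sum>a\<in>A. F a x))"
    by (rule smooth_add) (use insert in auto)
  then show ?case unfolding e .
qed
lemma smooth_prod: "open U \<Longrightarrow> (\<And>a. a \<in> A \<Longrightarrow> smooth_on U (F a)) \<Longrightarrow> smooth_on U (\<lambda>x. (\<Prod>a\<in>A. F a x) :: real)"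
proof (induction A rule: infinite_finite_induct)
  case (infinite A) then show ?case by (simp add: smooth_const)
next
  case empty then show ?case by (simp add: smooth_const)
next
  case (insert a A)
  have e: "(\<lambda>x. \<Prod>a\<in>insert a A. F a x) = (\<lambda>x. F a x * (\<Prod>a\<in>A. F a x))" using insert.hyps by simp
  have "smooth_on U (\<lambda>x. F a x * (\<Prod>a\<in>A. F a x))"
    by (rule smooth_mult) (use insert in auto)
  then show ?case unfolding e .
qed
lemma smooth_power: "open U \<Longrightarrow> smooth_on U f \<Longrightarrow> smooth_on U (\<lambda>x. (f x) ^ k :: real)"
proof (induction k)
  case 0 then show ?case by (simp add: smooth_const)
next
  case (Suc k) then show ?case using smooth_mult[of U f "\<lambda>x. f x ^ k"] by simp
qed
lemma smooth_if: "smooth_on U f \<Longrightarrow> smooth_on U g \<Longrightarrow> smooth_on U (\<lambda>x. if b then f x else g x)"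
  by (cases b) auto



lemma line_deriv:
  fixes F :: "real^'n::finite \<Rightarrow> real"
  assumes "F differentiable (at (a + s *\<^sub>R axis k 1))"
  shows "((\<lambda>t. F (a + t *\<^sub>R axis k 1)) has_real_derivative pd k F (a + s *\<^sub>R axis k 1)) (at s)"
proof -
  let ?F' = "frechet_derivative F (at (a + s *\<^sub>R axis k 1))"
  have dF: "(F has_derivative ?F') (at (a + s *\<^sub>R axis k 1))"
    using assms frechet_derivative_works by blast
  have dl: "((\<lambda>t. a + t *\<^sub>R axis k 1) has_derivative (\<lambda>t. t *\<^sub>R axis k 1)) (at s)"
    by (auto intro!: derivative_eq_intros)
  have "((\<lambda>t. F (a + t *\<^sub>R axis k 1)) has_derivative (\<lambda>t. ?F' (t *\<^sub>R axis k 1))) (at s)"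
    using has_derivative_compose[OF dl dF] by simp
  moreover have "?F' (t *\<^sub>R axis k 1) = pd k F (a + s *\<^sub>R axis k 1) * t" for t
    using linear_scale[OF has_derivative_linear[OF dF]] unfolding pd_def by simp
  then have "(\<lambda>t. ?F' (t *\<^sub>R axis k 1)) = (*) (pd k F (a + s *\<^sub>R axis k 1))"
    by (auto simp: fun_eq_iff)
  ultimately show ?thesis unfolding has_field_derivative_def by simp
qed


lemma mixed_mvt:
  fixes f :: "real^'n::finite \<Rightarrow> real"
  assumes U: "open U" and f: "smooth_on U f" and h: "h > 0"
    and box: "\<And>s t. 0 \<le> s \<Longrightarrow> s \<le> h \<Longrightarrow> 0 \<le> t \<Longrightarrow> t \<le> h \<Longrightarrow> p + s *\<^sub>R axis i 1 + t *\<^sub>R axis j 1 \<in> U"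
  shows "\<exists>s t. 0 < s \<and> s < h \<and> 0 < t \<and> t < h \<and>
     f (p + h *\<^sub>R axis i 1 + h *\<^sub>R axis j 1) - f (p + h *\<^sub>R axis i 1) - f (p + h *\<^sub>R axis j 1) + f p
       = h^2 * pd j (pd i f) (p + s *\<^sub>R axis i 1 + t *\<^sub>R axis j 1)"
proof -
  define ei :: "real^'n" where "ei = axis i 1"
  define ej :: "real^'n" where "ej = axis j 1"
  have box': "p + s *\<^sub>R ei + t *\<^sub>R ej \<in> U" if "0 \<le> s" "s \<le> h" "0 \<le> t" "t \<le> h" for s t
    using box[OF that] unfolding ei_def ej_def .
  define \<phi> where "\<phi> s = f ((p + h *\<^sub>R ej) + s *\<^sub>R ei) - f (p + s *\<^sub>R ei)" for s
  have "DERIV \<phi> s :> pd i f ((p + h *\<^sub>R ej) + s *\<^sub>R ei) - pd i f (p + s *\<^sub>R ei)" if "0 \<le> s" "s \<le> h" for s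
  proof -
    have u1: "(p + h *\<^sub>R ej) + s *\<^sub>R ei \<in> U" using box'[of s h] that h by (simp add: algebra_simps)
    have u2: "p + s *\<^sub>R ei \<in> U" using box'[of s 0] that h by simp
    show ?thesis unfolding \<phi>_def ei_def
      by (intro DERIV_diff line_deriv smooth_diff[OF f]) (use u1 u2 in \<open>auto simp: ei_def\<close>)
  qed
  from MVT2[OF h this] obtain s where s: "0 < s" "s < h"
    and e1: "\<phi> h - \<phi> 0 = (h - 0) * (pd i f ((p + h *\<^sub>R ej) + s *\<^sub>R ei) - pd i f (p + s *\<^sub>R ei))"
    by blast
  define \<psi> where "\<psi> t = pd i f ((p + s *\<^sub>R ei) + t *\<^sub>R ej)" for t
  have "DERIV \<psi> t :> pd j (pd i f) ((p + s *\<^sub>R ei) + t *\<^sub>R ej)" if "0 \<le> t" "t \<le> h" for t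
  proof -
    have u1: "(p + s *\<^sub>R ei) + t *\<^sub>R ej \<in> U" using box'[of s t] that s by simp
    show ?thesis unfolding \<psi>_def ej_def
      by (intro line_deriv smooth_diff[OF smooth_pd[OF f]]) (use u1 in \<open>auto simp: ej_def\<close>)
  qed
  from MVT2[OF h this] obtain t where t: "0 < t" "t < h"
    and e2: "\<psi> h - \<psi> 0 = (h - 0) * pd j (pd i f) ((p + s *\<^sub>R ei) + t *\<^sub>R ej)"
    by blast
  have "\<psi> h - \<psi> 0 = pd i f ((p + h *\<^sub>R ej) + s *\<^sub>R ei) - pd i f (p + s *\<^sub>R ei)"
    unfolding \<psi>_def by (simp add: algebra_simps)
  then have "\<phi> h - \<phi> 0 = h^2 * pd j (pd i f) (p + s *\<^sub>R ei + t *\<^sub>R ej)"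
    using e1 e2 by (simp add: power2_eq_square)
  moreover have "\<phi> h - \<phi> 0 = f (p + h *\<^sub>R ei + h *\<^sub>R ej) - f (p + h *\<^sub>R ei) - f (p + h *\<^sub>R ej) + f p"
    unfolding \<phi>_def by (simp add: algebra_simps)
  ultimately show ?thesis using s t unfolding ei_def ej_def by metis
qed

lemma pd_comm:
  fixes f :: "real^'n::finite \<Rightarrow> real"
  assumes U: "open U" and f: "smooth_on U f" and p: "p \<in> U"
  shows "pd i (pd j f) p = pd j (pd i f) p"
proof (rule ccontr)
  assume ne: "pd i (pd j f) p \<noteq> pd j (pd i f) p"
  define g1 where "g1 = pd j (pd i f)"
  define g2 where "g2 = pd i (pd j f)"
  define e where "e = \<bar>g1 p - g2 p\<bar> / 2"
  have e: "e > 0" using ne unfolding e_def g1_def g2_def by simp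
  have c1: "continuous (at p) g1" unfolding g1_def
    using smooth_cont[OF smooth_pd[OF smooth_pd[OF f]]] U p continuous_on_eq_continuous_at by blast
  have c2: "continuous (at p) g2" unfolding g2_def
    using smooth_cont[OF smooth_pd[OF smooth_pd[OF f]]] U p continuous_on_eq_continuous_at by blast
  obtain d1 where d1: "d1 > 0" "\<And>x. dist x p < d1 \<Longrightarrow> dist (g1 x) (g1 p) < e"
    using c1 e unfolding continuous_at_eps_delta by blast
  obtain d2 where d2: "d2 > 0" "\<And>x. dist x p < d2 \<Longrightarrow> dist (g2 x) (g2 p) < e"
    using c2 e unfolding continuous_at_eps_delta by blast
  obtain r where r: "r > 0" "ball p r \<subseteq> U" using U p open_contains_ball by blast
  define h where "h = min r (min d1 d2) / 3"
  have h: "h > 0" using r d1 d2 unfolding h_def by simp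
  have near: "dist (p + s *\<^sub>R axis a 1 + t *\<^sub>R axis b 1) p < min r (min d1 d2)"
    if "0 \<le> s" "s \<le> h" "0 \<le> t" "t \<le> h" for s t and a b :: 'n
  proof -
    have "dist (p + s *\<^sub>R axis a 1 + t *\<^sub>R axis b 1) p = norm (s *\<^sub>R axis a 1 + t *\<^sub>R axis b 1 :: real^'n)"
      by (simp add: dist_norm)
    also have "\<dots> \<le> norm (s *\<^sub>R axis a 1 :: real^'n) + norm (t *\<^sub>R axis b 1 :: real^'n)"
      by (rule norm_triangle_ineq)
    also have "\<dots> = s + t" using that by simp
    also have "\<dots> < min r (min d1 d2)" using that h unfolding h_def by linarith
    finally show ?thesis .
  qed
  have boxij: "p + s *\<^sub>R axis i 1 + t *\<^sub>R axis j 1 \<in> U" if "0 \<le> s" "s \<le> h" "0 \<le> t" "t \<le> h" for s t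
    using near[OF that] r by (auto simp: dist_commute)
  have boxji: "p + s *\<^sub>R axis j 1 + t *\<^sub>R axis i 1 \<in> U" if "0 \<le> s" "s \<le> h" "0 \<le> t" "t \<le> h" for s t
    using near[OF that] r by (auto simp: dist_commute)
  obtain s1 t1 where st1: "0 < s1" "s1 < h" "0 < t1" "t1 < h" and
    E1: "f (p + h *\<^sub>R axis i 1 + h *\<^sub>R axis j 1) - f (p + h *\<^sub>R axis i 1) - f (p + h *\<^sub>R axis j 1) + f p
       = h^2 * g1 (p + s1 *\<^sub>R axis i 1 + t1 *\<^sub>R axis j 1)"
    using mixed_mvt[OF U f h boxij] unfolding g1_def by blast
  obtain s2 t2 where st2: "0 < s2" "s2 < h" "0 < t2" "t2 < h" and
    E2: "f (p + h *\<^sub>R axis j 1 + h *\<^sub>R axis i 1) - f (p + h *\<^sub>R axis j 1) - f (p + h *\<^sub>R axis i 1) + f p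
       = h^2 * g2 (p + s2 *\<^sub>R axis j 1 + t2 *\<^sub>R axis i 1)"
    using mixed_mvt[OF U f h boxji] unfolding g2_def by blast
  have pe: "p + h *\<^sub>R axis j 1 + h *\<^sub>R axis i 1 = p + h *\<^sub>R axis i 1 + h *\<^sub>R axis j 1" by (simp add: algebra_simps)
  have "h^2 * g1 (p + s1 *\<^sub>R axis i 1 + t1 *\<^sub>R axis j 1) = h^2 * g2 (p + s2 *\<^sub>R axis j 1 + t2 *\<^sub>R axis i 1)"
    using E1 E2[unfolded pe] by linarith
  then have eq: "g1 (p + s1 *\<^sub>R axis i 1 + t1 *\<^sub>R axis j 1) = g2 (p + s2 *\<^sub>R axis j 1 + t2 *\<^sub>R axis i 1)"
    using h by simp
  have a1: "dist (g1 (p + s1 *\<^sub>R axis i 1 + t1 *\<^sub>R axis j 1)) (g1 p) < e"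
    using d1(2) near[of s1 t1 i j] st1 by auto
  have a2: "dist (g2 (p + s2 *\<^sub>R axis j 1 + t2 *\<^sub>R axis i 1)) (g2 p) < e"
    using d2(2) near[of s2 t2 j i] st2 by auto
  have "\<bar>g1 p - g2 p\<bar> < 2 * e" using a1 a2 eq unfolding dist_real_def by linarith
  then show False unfolding e_def by simp
qed



lemma sdm1: "(\<Sum>k\<in>UNIV. f k * (if k = j then 1 else 0)) = (f (j::'n::finite) :: real)"
  by (simp add: if_distrib[of "\<lambda>x. f _ * x"] cong: if_cong)

lemma sdm2: "(\<Sum>k\<in>UNIV. (if k = j then 1 else 0) * f k) = (f (j::'n::finite) :: real)"
  by (simp add: if_distrib[of "\<lambda>x. x * f _"] cong: if_cong)

lemma dsimp1: "(x::real) * (if P then 1 else 0) = (if P then x else 0)" by simp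
lemma dsimp2: "(if P then 1 else 0) * (x::real) = (if P then x else 0)" by simp
lemma dsimp3: "(if P then x else 0) / (c::real) = (if P then x / c else 0)" by simp
lemma dsimp4: "(if P then x else 0) * (c::real) = (if P then x * c else 0)" by simp
lemma dsimp5: "(c::real) * (if P then x else 0) = (if P then c * x else 0)" by simp
lemmas dsimps = dsimp1 dsimp2 dsimp3 dsimp4 dsimp5

locale geo =
  fixes U :: "(real^'n::finite) set" and G :: "real^'n \<Rightarrow> real^'n^'n"
  assumes U: "open U" and rm: "riemannian_metric_on U G"
begin

lemma G_smooth: "smooth_on U G"
  using rm unfolding riemannian_metric_on_def by blast

lemma Gc_sm: "smooth_on U (\<lambda>q. G q $ a $ b)"
  using smooth_nth[OF U smooth_nth[OF U G_smooth]] by simp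

lemma Gtr: "q \<in> U \<Longrightarrow> transpose (G q) = G q"
  using rm unfolding riemannian_metric_on_def by blast

lemma Gsym: "q \<in> U \<Longrightarrow> G q $ a $ b = G q $ b $ a"
proof -
  assume q: "q \<in> U"
  have "G q $ a $ b = transpose (G q) $ a $ b" using Gtr[OF q] by simp
  also have "\<dots> = G q $ b $ a" by (simp add: transpose_def)
  finally show ?thesis .
qed

lemma Gpos: "q \<in> U \<Longrightarrow> x \<noteq> 0 \<Longrightarrow> x \<bullet> (G q *v x) > 0"
  using rm unfolding riemannian_metric_on_def by blast

lemma G_invertible: "q \<in> U \<Longrightarrow> invertible (G q)"
proof -
  assume q: "q \<in> U"
  have "\<forall>x. G q *v x = 0 \<longrightarrow> x = 0"
    using Gpos[OF q] by (metis inner_zero_right less_irrefl)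
  then show ?thesis unfolding invertible_left_inverse matrix_left_invertible_ker[symmetric] .
qed

lemma GGi: "q \<in> U \<Longrightarrow> G q ** Gi G q = mat 1 \<and> Gi G q ** G q = mat 1"
proof -
  assume q: "q \<in> U"
  have "\<exists>A'. G q ** A' = mat 1 \<and> A' ** G q = mat 1" using G_invertible[OF q] unfolding invertible_def .
  then show ?thesis unfolding Gi_def matrix_inv_def by (rule someI_ex)
qed

lemma Gi_sym: "q \<in> U \<Longrightarrow> Gi G q $ a $ b = Gi G q $ b $ a"
proof -
  assume q: "q \<in> U"
  have tG: "transpose (G q) = G q" using Gtr[OF q] .
  have l: "transpose (Gi G q) ** G q = mat 1"
    using GGi[OF q] matrix_transpose_mul[of "G q" "Gi G q"] tG by simp
  have "transpose (Gi G q) = transpose (Gi G q) ** (G q ** Gi G q)" using GGi[OF q] by simp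
  also have "\<dots> = (transpose (Gi G q) ** G q) ** Gi G q" by (simp add: matrix_mul_assoc)
  also have "\<dots> = Gi G q" using l by simp
  finally have t: "transpose (Gi G q) = Gi G q" .
  have "Gi G q $ a $ b = transpose (Gi G q) $ a $ b" using t by simp
  also have "\<dots> = Gi G q $ b $ a" by (simp add: transpose_def)
  finally show ?thesis .
qed

lemma det_G_nz: "q \<in> U \<Longrightarrow> det (G q) \<noteq> 0"
  using G_invertible invertible_det_nz by blast

lemma Gi_cramer: "q \<in> U \<Longrightarrow> Gi G q $ i $ j = det (\<chi> r c. if c = i then axis j 1 $ r else G q $ r $ c) / det (G q)"
proof -
  assume q: "q \<in> U"
  have "G q *v (Gi G q *v axis j 1) = axis j 1"
    using GGi[OF q] by (simp add: matrix_vector_mul_assoc)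
  then have "Gi G q *v axis j 1 = (\<chi> k. det (\<chi> r c. if c = k then axis j 1 $ r else G q $ r $ c) / det (G q))"
    using cramer[OF det_G_nz[OF q]] by blast
  moreover have "(Gi G q *v axis j 1) $ i = Gi G q $ i $ j"
    by (simp add: matrix_vector_mult_def axis_def sdm1)
  ultimately show ?thesis by simp
qed

lemma smooth_det:
  fixes A :: "real^'n \<Rightarrow> real^'m::finite^'m"
  assumes "\<And>r c. smooth_on U (\<lambda>q. A q $ r $ c)"
  shows "smooth_on U (\<lambda>q. det (A q))"
  unfolding det_def
  by (intro smooth_sum[OF U] smooth_mult[OF U] smooth_const smooth_prod[OF U] assms)

lemma Gi_sm: "smooth_on U (\<lambda>q. Gi G q $ i $ j)"
proof (rule smooth_cong[OF U])
  show "smooth_on U (\<lambda>q. det (\<chi> r c. if c = i then axis j 1 $ r else G q $ r $ c) / det (G q))"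
    by (intro smooth_divide[OF U] smooth_det)
       (auto simp: det_G_nz smooth_const Gc_sm intro!: smooth_if)
qed (simp add: Gi_cramer)


lemma GGi_c: "q \<in> U \<Longrightarrow> (\<Sum>l\<in>UNIV. G q $ a $ l * Gi G q $ l $ b) = (if a = b then 1 else 0)"
proof -
  assume q: "q \<in> U"
  have "(G q ** Gi G q) $ a $ b = mat 1 $ a $ b" using GGi[OF q] by simp
  then show ?thesis by (simp add: matrix_matrix_mult_def mat_def)
qed

lemma GiG_c: "q \<in> U \<Longrightarrow> (\<Sum>l\<in>UNIV. Gi G q $ a $ l * G q $ l $ b) = (if a = b then 1 else 0)"
proof -
  assume q: "q \<in> U"
  have "(Gi G q ** G q) $ a $ b = mat 1 $ a $ b" using GGi[OF q] by simp
  then show ?thesis by (simp add: matrix_matrix_mult_def mat_def)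
qed

lemma pdG_sym: "q \<in> U \<Longrightarrow> pd i (\<lambda>x. G x $ a $ b) q = pd i (\<lambda>x. G x $ b $ a) q"
  by (rule pd_cong_open[OF smooth_diff[OF Gc_sm] U]) (auto simp: Gsym)

lemma chr_sm: "smooth_on U (chr G k i j)"
  unfolding chr_def
  by (intro smooth_mult[OF U] smooth_const smooth_sum[OF U] Gi_sm smooth_add[OF U] smooth_minus[OF U] smooth_pd Gc_sm)

lemma chr_sym: "q \<in> U \<Longrightarrow> chr G k i j q = chr G k j i q"
  unfolding chr_def using pdG_sym[of q] by (simp add: algebra_simps)

lemma chr_low: "q \<in> U \<Longrightarrow> (\<Sum>k\<in>UNIV. chr G k i j q * G q $ k $ l) =
   (pd i (\<lambda>x. G x $ j $ l) q + pd j (\<lambda>x. G x $ i $ l) q - pd l (\<lambda>x. G x $ i $ j) q) / 2"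
proof -
  assume q: "q \<in> U"
  define B where "B m = pd i (\<lambda>x. G x $ j $ m) q + pd j (\<lambda>x. G x $ i $ m) q - pd m (\<lambda>x. G x $ i $ j) q" for m
  have "(\<Sum>k\<in>UNIV. chr G k i j q * G q $ k $ l) = (\<Sum>k\<in>UNIV. \<Sum>m\<in>UNIV. (1/2) * B m * (Gi G q $ m $ k * G q $ k $ l))"
    unfolding chr_def B_def by (simp add: sum_distrib_left sum_distrib_right Gi_sym[OF q] mult_ac)
  also have "\<dots> = (\<Sum>m\<in>UNIV. (1/2) * B m * (\<Sum>k\<in>UNIV. Gi G q $ m $ k * G q $ k $ l))"
    by (subst sum.swap) (simp add: sum_distrib_left)
  also have "\<dots> = (1/2) * B l"
    by (simp add: GiG_c[OF q] dsimps)
  finally show ?thesis unfolding B_def by simp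
qed

lemma nablaG: "q \<in> U \<Longrightarrow> pd i (\<lambda>x. G x $ j $ k) q =
    (\<Sum>l\<in>UNIV. chr G l i j q * G q $ l $ k) + (\<Sum>l\<in>UNIV. chr G l i k q * G q $ j $ l)"
proof -
  assume q: "q \<in> U"
  have "(\<Sum>l\<in>UNIV. chr G l i k q * G q $ j $ l) = (\<Sum>l\<in>UNIV. chr G l i k q * G q $ l $ j)"
    using Gsym[OF q] by simp
  then show ?thesis using chr_low[OF q, of i j k] chr_low[OF q, of i k j] pdG_sym[OF q] by simp
qed

end


definition vsm :: "(real^'n::finite) set \<Rightarrow> (real^'n \<Rightarrow> real^'m::finite) \<Rightarrow> bool" where
  "vsm U F = (\<forall>k. smooth_on U (\<lambda>q. F q $ k))"

lemma vsm_nth: "vsm U F \<Longrightarrow> smooth_on U (\<lambda>q. F q $ k)"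
  unfolding vsm_def by blast

lemma vsm_const: "vsm U (\<lambda>q. c)"
  unfolding vsm_def by (simp add: smooth_const)

lemma vsm_smooth: "open U \<Longrightarrow> smooth_on U X \<Longrightarrow> vsm U X"
  unfolding vsm_def using smooth_nth by blast

lemma pd_sum:
  assumes "\<And>a. a \<in> A \<Longrightarrow> F a differentiable (at q)"
  shows "pd i (\<lambda>x. \<Sum>a\<in>A. F a x) q = (\<Sum>a\<in>A. pd i (F a) q)"
  using assms
proof (induction A rule: infinite_finite_induct)
  case (infinite A) then show ?case by (simp add: pd_const)
next
  case empty then show ?case by (simp add: pd_const)
next
  case (insert a A)
  have d: "(\<lambda>x. \<Sum>a\<in>A. F a x) differentiable (at q)"
    using insert.prems insert.hyps by (intro differentiable_sum) auto
  have "pd i (\<lambda>x. \<Sum>a\<in>insert a A. F a x) q = pd i (\<lambda>x. F a x + (\<Sum>a\<in>A. F a x)) q"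
    using insert.hyps insert.prems by simp
  also have "\<dots> = pd i (F a) q + pd i (\<lambda>x. \<Sum>a\<in>A. F a x) q"
    using pd_add[OF _ d, of "F a"] insert.prems by simp
  finally show ?case using insert.hyps insert.prems insert.IH by simp
qed

lemma pd_diff:
  assumes "f differentiable (at q)" "g differentiable (at q)"
  shows "pd i (\<lambda>x. f x - g x) q = pd i f q - pd i g q"
proof -
  have "((\<lambda>x. f x - g x) has_derivative (\<lambda>h. frechet_derivative f (at q) h - frechet_derivative g (at q) h)) (at q)"
    using assms frechet_derivative_works has_derivative_diff by blast
  then have "frechet_derivative (\<lambda>x. f x - g x) (at q) = (\<lambda>h. frechet_derivative f (at q) h - frechet_derivative g (at q) h)"
    by (rule frechet_derivative_at[symmetric])
  then show ?thesis unfolding pd_def by simp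
qed

lemma sw2: "(\<Sum>a\<in>A. \<Sum>b\<in>B. \<Sum>c\<in>C. F a b c) = (\<Sum>a\<in>A. \<Sum>c\<in>C. \<Sum>b\<in>B. F a b c)"
  by (rule sum.cong[OF refl], rule sum.swap)

lemma c1: "(\<Sum>j\<in>A. \<Sum>k\<in>B. \<Sum>l\<in>A. F j l k) = (\<Sum>j\<in>A. \<Sum>k\<in>B. \<Sum>l\<in>A. F l j k)"
proof -
  have "(\<Sum>j\<in>A. \<Sum>k\<in>B. \<Sum>l\<in>A. F j l k) = (\<Sum>k\<in>B. \<Sum>j\<in>A. \<Sum>l\<in>A. F j l k)" by (rule sum.swap)
  also have "\<dots> = (\<Sum>k\<in>B. \<Sum>l\<in>A. \<Sum>j\<in>A. F j l k)" by (rule sum.cong[OF refl], rule sum.swap)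
  also have "\<dots> = (\<Sum>j\<in>A. \<Sum>k\<in>B. \<Sum>l\<in>A. F l j k)" by (rule sum.swap[symmetric])
  finally show ?thesis .
qed

lemma c2: "(\<Sum>j\<in>A. \<Sum>k\<in>B. \<Sum>l\<in>B. F j k l) = (\<Sum>j\<in>A. \<Sum>k\<in>B. \<Sum>l\<in>B. F j l k)"
  by (rule sum.cong[OF refl], rule sum.swap)

definition bil :: "('n::finite \<Rightarrow> 'n \<Rightarrow> real^'n \<Rightarrow> real) \<Rightarrow> real^'n \<Rightarrow> real^'n \<Rightarrow> real^'n \<Rightarrow> real" where
  "bil T q x y = (\<Sum>j\<in>UNIV. \<Sum>k\<in>UNIV. x $ j * y $ k * T j k q)"

definition covT :: "(real^'n::finite \<Rightarrow> real^'n^'n) \<Rightarrow> ('n \<Rightarrow> 'n \<Rightarrow> real^'n \<Rightarrow> real) \<Rightarrow> 'n \<Rightarrow> 'n \<Rightarrow> 'n \<Rightarrow> real^'n \<Rightarrow> real" where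
  "covT G T i j k q = pd i (T j k) q - (\<Sum>l\<in>UNIV. chr G l i j q * T l k q) - (\<Sum>l\<in>UNIV. chr G l i k q * T j l q)"

definition nab :: "(real^'n::finite \<Rightarrow> real^'n^'n) \<Rightarrow> 'n \<Rightarrow> (real^'n \<Rightarrow> real^'n) \<Rightarrow> real^'n \<Rightarrow> real^'n" where
  "nab G i A p = (\<chi> j. pd i (\<lambda>q. A q $ j) p + (\<Sum>l\<in>UNIV. chr G j i l p * A p $ l))"

lemma bil_add1: "bil T q (x + y) z = bil T q x z + bil T q y z"
  unfolding bil_def by (simp add: algebra_simps sum.distrib)
lemma bil_add2: "bil T q z (x + y) = bil T q z x + bil T q z y"
  unfolding bil_def by (simp add: algebra_simps sum.distrib)
lemma bil_scale1: "bil T q (c *\<^sub>R x) z = c * bil T q x z"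
  unfolding bil_def by (simp add: algebra_simps sum_distrib_left)
lemma bil_scale2: "bil T q z (c *\<^sub>R x) = c * bil T q z x"
  unfolding bil_def by (simp add: algebra_simps sum_distrib_left)
lemma bil_zero1: "bil T q 0 z = 0" by (simp add: bil_def)
lemma bil_zero2: "bil T q z 0 = 0" by (simp add: bil_def)
lemma bil_sum1: "bil T q (\<Sum>i\<in>A. x i) z = (\<Sum>i\<in>A. bil T q (x i) z)"
  by (induction A rule: infinite_finite_induct) (simp_all add: bil_add1 bil_zero1)
lemma bil_sum2: "bil T q z (\<Sum>i\<in>A. x i) = (\<Sum>i\<in>A. bil T q z (x i))"
  by (induction A rule: infinite_finite_induct) (simp_all add: bil_add2 bil_zero2)

context geo
begin

lemma sm_dirf: "vsm U X \<Longrightarrow> smooth_on U f \<Longrightarrow> smooth_on U (dirf X f)"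
  unfolding dirf_def
  by (intro smooth_sum[OF U] smooth_mult[OF U] vsm_nth smooth_pd) auto

lemma vsm_covd: "vsm U X \<Longrightarrow> vsm U Y \<Longrightarrow> vsm U (covd G X Y)"
  unfolding vsm_def covd_def
  by (simp, intro allI smooth_add[OF U] smooth_sum[OF U] smooth_mult[OF U] sm_dirf chr_sm vsm_nth)
     (auto simp: vsm_def)

lemma vsm_lie: "vsm U X \<Longrightarrow> vsm U Y \<Longrightarrow> vsm U (lie X Y)"
  unfolding vsm_def lie_def
  by (simp, intro allI smooth_minus[OF U] sm_dirf) (auto simp: vsm_def)

lemma vsm_add: "vsm U A \<Longrightarrow> vsm U B \<Longrightarrow> vsm U (\<lambda>q. A q + B q)"
  unfolding vsm_def by (simp add: smooth_add[OF U])

lemma vsm_scale: "smooth_on U f \<Longrightarrow> vsm U A \<Longrightarrow> vsm U (\<lambda>q. f q *\<^sub>R A q)"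
  unfolding vsm_def by (simp add: smooth_mult[OF U])

lemma dirf_add: "smooth_on U f \<Longrightarrow> smooth_on U g \<Longrightarrow> p \<in> U \<Longrightarrow>
   dirf X (\<lambda>q. f q + g q) p = dirf X f p + dirf X g p"
  unfolding dirf_def by (simp add: pd_add smooth_diff algebra_simps sum.distrib)

lemma dirf_minus: "smooth_on U f \<Longrightarrow> smooth_on U g \<Longrightarrow> p \<in> U \<Longrightarrow>
   dirf X (\<lambda>q. f q - g q) p = dirf X f p - dirf X g p"
  unfolding dirf_def by (simp add: pd_diff smooth_diff algebra_simps sum_subtractf)

lemma dirf_mult: "smooth_on U f \<Longrightarrow> smooth_on U g \<Longrightarrow> p \<in> U \<Longrightarrow>
   dirf X (\<lambda>q. f q * g q) p = dirf X f p * g p + f p * dirf X g p"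
  unfolding dirf_def by (simp add: pd_mult smooth_diff algebra_simps sum.distrib sum_distrib_left sum_distrib_right)

lemma dirf_const: "dirf X (\<lambda>q. c) p = 0"
  unfolding dirf_def by (simp add: pd_const)

lemma dirf_sum: "(\<And>a. a \<in> A \<Longrightarrow> smooth_on U (F a)) \<Longrightarrow> p \<in> U \<Longrightarrow>
   dirf X (\<lambda>q. \<Sum>a\<in>A. F a q) p = (\<Sum>a\<in>A. dirf X (F a) p)"
proof -
  assume a: "\<And>a. a \<in> A \<Longrightarrow> smooth_on U (F a)" "p \<in> U"
  have "pd i (\<lambda>q. \<Sum>a\<in>A. F a q) p = (\<Sum>a\<in>A. pd i (F a) p)" for i
    by (rule pd_sum) (use a smooth_diff in blast)
  then show ?thesis unfolding dirf_def by (simp add: sum_distrib_left) (rule sum.swap)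
qed

lemma dirf_cong: "smooth_on U f \<Longrightarrow> p \<in> U \<Longrightarrow> (\<And>q. q \<in> U \<Longrightarrow> f q = g q) \<Longrightarrow> dirf X f p = dirf X g p"
proof -
  assume a: "smooth_on U f" "p \<in> U" "\<And>q. q \<in> U \<Longrightarrow> f q = g q"
  have "pd i f p = pd i g p" for i
    by (rule pd_cong_open[OF smooth_diff[OF a(1,2)] U a(2)]) (use a in auto)
  then show ?thesis unfolding dirf_def by simp
qed


lemma covd_add: "vsm U A \<Longrightarrow> vsm U B \<Longrightarrow> p \<in> U \<Longrightarrow>
   covd G X (\<lambda>q. A q + B q) p = covd G X A p + covd G X B p"
  unfolding covd_def by (simp add: vec_eq_iff dirf_add vsm_nth algebra_simps sum.distrib)

lemma covd_scale: "smooth_on U f \<Longrightarrow> vsm U A \<Longrightarrow> p \<in> U \<Longrightarrow>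
   covd G X (\<lambda>q. f q *\<^sub>R A q) p = dirf X f p *\<^sub>R A p + f p *\<^sub>R covd G X A p"
  unfolding covd_def by (simp add: vec_eq_iff dirf_mult vsm_nth algebra_simps sum_distrib_left)

lemma covd_cong: "vsm U A \<Longrightarrow> p \<in> U \<Longrightarrow> (\<And>q. q \<in> U \<Longrightarrow> A q = B q) \<Longrightarrow> covd G X A p = covd G X B p"
  unfolding covd_def by (simp add: vec_eq_iff, intro allI, subst dirf_cong[OF vsm_nth], auto)

lemma dirf_comm: "vsm U X \<Longrightarrow> vsm U Z \<Longrightarrow> smooth_on U f \<Longrightarrow> p \<in> U \<Longrightarrow>
   dirf X (dirf Z f) p - dirf Z (dirf X f) p = dirf (lie X Z) f p"
proof -
  assume X: "vsm U X" and Z: "vsm U Z" and f: "smooth_on U f" and p: "p \<in> U"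
  have d: "\<And>W j. vsm U W \<Longrightarrow> (\<lambda>q. W q $ j) differentiable (at p)" using smooth_diff[OF vsm_nth p] by blast
  have d2: "\<And>j. pd j f differentiable (at p)" using smooth_diff[OF smooth_pd[OF f] p] .
  have e: "\<And>W i. vsm U W \<Longrightarrow> pd i (dirf W f) p = (\<Sum>j\<in>UNIV. pd i (\<lambda>q. W q $ j) p * pd j f p + W p $ j * pd i (pd j f) p)"
    unfolding dirf_def by (subst pd_sum) (auto simp: pd_mult d d2 differentiable_mult)
  have "dirf X (dirf Z f) p = (\<Sum>i\<in>UNIV. \<Sum>j\<in>UNIV. X p $ i * pd i (\<lambda>q. Z q $ j) p * pd j f p)
        + (\<Sum>i\<in>UNIV. \<Sum>j\<in>UNIV. X p $ i * Z p $ j * pd i (pd j f) p)"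
    unfolding dirf_def[of X] using e[OF Z] by (simp add: sum_distrib_left sum.distrib algebra_simps)
  moreover have "dirf Z (dirf X f) p = (\<Sum>i\<in>UNIV. \<Sum>j\<in>UNIV. Z p $ i * pd i (\<lambda>q. X q $ j) p * pd j f p)
        + (\<Sum>i\<in>UNIV. \<Sum>j\<in>UNIV. Z p $ i * X p $ j * pd i (pd j f) p)"
    unfolding dirf_def[of Z] using e[OF X] by (simp add: sum_distrib_left sum.distrib algebra_simps)
  moreover have "(\<Sum>i\<in>UNIV. \<Sum>j\<in>UNIV. Z p $ i * X p $ j * pd i (pd j f) p) = (\<Sum>i\<in>UNIV. \<Sum>j\<in>UNIV. X p $ i * Z p $ j * pd i (pd j f) p)"
    by (subst sum.swap) (simp add: pd_comm[OF U f p] mult_ac)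
  moreover have "dirf (lie X Z) f p = (\<Sum>i\<in>UNIV. \<Sum>j\<in>UNIV. X p $ i * pd i (\<lambda>q. Z q $ j) p * pd j f p)
       - (\<Sum>i\<in>UNIV. \<Sum>j\<in>UNIV. Z p $ i * pd i (\<lambda>q. X q $ j) p * pd j f p)"
    unfolding dirf_def lie_def
    by (simp add: sum_distrib_left sum_distrib_right sum_subtractf algebra_simps) (subst (1 2) sum.swap, simp)
  ultimately show ?thesis by simp
qed

lemma torsion: "p \<in> U \<Longrightarrow> covd G X Y p - covd G Y X p = lie X Y p"
proof -
  assume p: "p \<in> U"
  have "(\<Sum>i\<in>UNIV. \<Sum>j\<in>UNIV. chr G k i j p * Y p $ i * X p $ j) = (\<Sum>i\<in>UNIV. \<Sum>j\<in>UNIV. chr G k i j p * X p $ i * Y p $ j)" for k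
    by (subst sum.swap) (simp add: chr_sym[OF p] mult_ac)
  then show ?thesis unfolding covd_def lie_def by (simp add: vec_eq_iff)
qed


lemma pd_bil:
  assumes A: "vsm U A" and B: "vsm U B" and T: "\<And>j k. smooth_on U (T j k)" and p: "p \<in> U"
  shows "pd i (\<lambda>q. bil T q (A q) (B q)) p = (\<Sum>j\<in>UNIV. \<Sum>k\<in>UNIV. A p $ j * B p $ k * covT G T i j k p)
     + bil T p (nab G i A p) (B p) + bil T p (A p) (nab G i B p)"
proof -
  have dA: "\<And>j. (\<lambda>q. A q $ j) differentiable (at p)" using smooth_diff[OF vsm_nth[OF A] p] .
  have dB: "\<And>j. (\<lambda>q. B q $ j) differentiable (at p)" using smooth_diff[OF vsm_nth[OF B] p] .
  have dT: "\<And>j k. T j k differentiable (at p)" using smooth_diff[OF T p] .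
  have L: "pd i (\<lambda>q. bil T q (A q) (B q)) p = (\<Sum>j\<in>UNIV. \<Sum>k\<in>UNIV.
     pd i (\<lambda>q. A q $ j) p * B p $ k * T j k p + A p $ j * pd i (\<lambda>q. B q $ k) p * T j k p + A p $ j * B p $ k * pd i (T j k) p)"
    unfolding bil_def
    by (subst pd_sum, simp add: differentiable_sum differentiable_mult dA dB dT,
        rule sum.cong[OF refl], subst pd_sum, simp add: differentiable_mult dA dB dT)
       (simp add: pd_mult differentiable_mult dA dB dT algebra_simps)
  have c1i: "(\<Sum>j\<in>UNIV. \<Sum>k\<in>UNIV. \<Sum>l\<in>UNIV. chr G j i l p * A p $ l * B p $ k * T j k p)
     = (\<Sum>j\<in>UNIV. \<Sum>k\<in>UNIV. \<Sum>l\<in>UNIV. chr G l i j p * A p $ j * B p $ k * T l k p)"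
    by (rule c1)
  have c2i: "(\<Sum>j\<in>UNIV. \<Sum>k\<in>UNIV. \<Sum>l\<in>UNIV. chr G k i l p * A p $ j * B p $ l * T j k p)
     = (\<Sum>j\<in>UNIV. \<Sum>k\<in>UNIV. \<Sum>l\<in>UNIV. chr G l i k p * A p $ j * B p $ k * T j l p)"
    by (rule c2)
  show ?thesis using L c1i c2i
    by (simp add: covT_def nab_def bil_def algebra_simps sum.distrib sum_subtractf sum_distrib_left sum_distrib_right)
qed

end


context geo
begin

lemma covd_nab: "covd G X A p = (\<Sum>i\<in>UNIV. X p $ i *\<^sub>R nab G i A p)"
  unfolding covd_def nab_def dirf_def
  by (simp add: vec_eq_iff sum_component algebra_simps sum.distrib sum_distrib_left)

lemma tensor_rule:
  assumes X: "vsm U X" and A: "vsm U A" and B: "vsm U B" and T: "\<And>j k. smooth_on U (T j k)" and p: "p \<in> U"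
  shows "dirf X (\<lambda>q. bil T q (A q) (B q)) p =
     (\<Sum>i\<in>UNIV. \<Sum>j\<in>UNIV. \<Sum>k\<in>UNIV. X p $ i * A p $ j * B p $ k * covT G T i j k p)
     + bil T p (covd G X A p) (B p) + bil T p (A p) (covd G X B p)"
proof -
  have "dirf X (\<lambda>q. bil T q (A q) (B q)) p = (\<Sum>i\<in>UNIV. X p $ i * ((\<Sum>j\<in>UNIV. \<Sum>k\<in>UNIV. A p $ j * B p $ k * covT G T i j k p)
     + bil T p (nab G i A p) (B p) + bil T p (A p) (nab G i B p)))"
    unfolding dirf_def using pd_bil[OF A B T p] by simp
  then show ?thesis
    unfolding covd_nab bil_sum1 bil_sum2 bil_scale1 bil_scale2
    by (simp add: algebra_simps sum.distrib sum_distrib_left)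
qed

definition Gt :: "'n \<Rightarrow> 'n \<Rightarrow> real^'n \<Rightarrow> real" where "Gt j k q = G q $ j $ k"

lemma gm_bil: "gm G q x y = bil Gt q x y"
  unfolding gm_def bil_def Gt_def
  by (simp add: inner_vec_def matrix_vector_mult_def sum_distrib_left mult_ac)

lemma covT_G: "p \<in> U \<Longrightarrow> covT G Gt i j k p = 0"
  unfolding covT_def Gt_def using nablaG[of p i j k] by (simp add: Gsym)

lemma Gt_sm: "smooth_on U (Gt j k)"
  unfolding Gt_def[abs_def] using Gc_sm .

lemma sm_bil: "(\<And>j k. smooth_on U (T j k)) \<Longrightarrow> vsm U A \<Longrightarrow> vsm U B \<Longrightarrow> smooth_on U (\<lambda>q. bil T q (A q) (B q))"
  unfolding bil_def by (intro smooth_sum[OF U] smooth_mult[OF U] vsm_nth) auto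

lemma sm_gm: "vsm U A \<Longrightarrow> vsm U B \<Longrightarrow> smooth_on U (\<lambda>q. gm G q (A q) (B q))"
  unfolding gm_bil using sm_bil[OF Gt_sm] .

lemma metric_compat:
  assumes X: "vsm U X" and A: "vsm U A" and B: "vsm U B" and p: "p \<in> U"
  shows "dirf X (\<lambda>q. gm G q (A q) (B q)) p = gm G p (covd G X A p) (B p) + gm G p (A p) (covd G X B p)"
  unfolding gm_bil using tensor_rule[OF X A B Gt_sm p] by (simp add: covT_G[OF p])

lemma gm_sym: "q \<in> U \<Longrightarrow> gm G q x y = gm G q y x"
  unfolding gm_bil bil_def Gt_def by (subst sum.swap) (simp add: Gsym mult_ac)

lemma gm_add1: "gm G q (x + y) z = gm G q x z + gm G q y z" unfolding gm_bil by (rule bil_add1)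
lemma gm_add2: "gm G q z (x + y) = gm G q z x + gm G q z y" unfolding gm_bil by (rule bil_add2)
lemma gm_scale1: "gm G q (c *\<^sub>R x) z = c * gm G q x z" unfolding gm_bil by (rule bil_scale1)
lemma gm_scale2: "gm G q z (c *\<^sub>R x) = c * gm G q z x" unfolding gm_bil by (rule bil_scale2)
lemma gm_minus1: "gm G q (x - y) z = gm G q x z - gm G q y z"
  using gm_add1[of q x "-y" z] gm_scale1[of q "-1" y z] by simp
lemma gm_minus2: "gm G q z (x - y) = gm G q z x - gm G q z y"
  using gm_add2[of q z x "-y"] gm_scale2[of q z "-1" y] by simp
lemma gm_uminus1: "gm G q (- x) z = - gm G q x z"
  using gm_scale1[of q "-1" x z] by simp
lemma gm_uminus2: "gm G q z (- x) = - gm G q z x"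
  using gm_scale2[of q z "-1" x] by simp
lemmas gm_lin = gm_add1 gm_add2 gm_scale1 gm_scale2 gm_minus1 gm_minus2 gm_uminus1 gm_uminus2

end


lemma pair_sym_alg:
  fixes R :: "'a \<Rightarrow> 'a \<Rightarrow> 'a \<Rightarrow> 'a \<Rightarrow> real"
  assumes A12: "\<And>i a j b. R i a j b = - R a i j b"
    and A34: "\<And>i a j b. R i a j b = - R i a b j"
    and B: "\<And>i a j b. R i a j b + R a j i b + R j i a b = 0"
  shows "R x z y w = R y w x z"
  using B[of x z y w] B[of z y w x] B[of y w x z] B[of w x z y] A12[of x z y w] A34[of x z y w] A12[of x z w y] A34[of x z w y] A12[of x y z w] A34[of x y z w] A12[of x y w z] A34[of x y w z] A12[of x w z y] A34[of x w z y] A12[of x w y z] A34[of x w y z] A12[of z x y w] A34[of z x y w] A12[of z x w y] A34[of z x w y] A12[of z y x w] A34[of z y x w] A12[of z y w x] A34[of z y w x] A12[of z w x y] A34[of z w x y] A12[of z w y x] A34[of z w y x] A12[of y x z w] A34[of y x z w] A12[of y x w z] A34[of y x w z] A12[of y z x w] A34[of y z x w] A12[of y z w x] A34[of y z w x] A12[of y w x z] A34[of y w x z] A12[of y w z x] A34[of y w z x] A12[of w x z y] A34[of w x z y] A12[of w x y z] A34[of w x y z] A12[of w z x y] A34[of w z x y] A12[of w z y x] A34[of w z y x] A12[of w y x z] A34[of w y x z] A12[of w y z x] A34[of w y z x] by linarith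


context geo
begin

lemma covd_X0: "X p = 0 \<Longrightarrow> covd G X Y p = 0"
  by (simp add: covd_def dirf_def vec_eq_iff)

lemma covd_dir_neg: "W' p = - W p \<Longrightarrow> covd G W' Y p = - covd G W Y p"
  by (simp add: covd_def dirf_def vec_eq_iff sum_negf)

lemma lie_neg: "lie Z X p = - lie X Z p"
  by (simp add: lie_def vec_eq_iff)

lemma lie_const: "lie (\<lambda>q. a) (\<lambda>q. b) p = 0"
  by (simp add: lie_def vec_eq_iff dirf_const)

lemma rmvec_antisym: "rmvec G X Z Y p = - rmvec G Z X Y p"
  unfolding rmvec_def using covd_dir_neg[of "lie Z X" p "lie X Z" Y, OF lie_neg] by simp

lemma rm_metric:
  assumes X: "vsm U X" and Z: "vsm U Z" and Y: "vsm U Y" and W: "vsm U W" and p: "p \<in> U"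
  shows "gm G p (rmvec G X Z Y p) (W p) + gm G p (Y p) (rmvec G X Z W p) = 0"
proof -
  define g where "g = (\<lambda>q. gm G q (Y q) (W q))"
  have gs: "smooth_on U g" unfolding g_def by (rule sm_gm[OF Y W])
  have two: "dirf A (dirf B g) p = gm G p (covd G A (covd G B Y) p) (W p) + gm G p (covd G B Y p) (covd G A W p)
     + gm G p (covd G A Y p) (covd G B W p) + gm G p (Y p) (covd G A (covd G B W) p)"
    if A: "vsm U A" and B: "vsm U B" for A B
  proof -
    have "dirf A (dirf B g) p = dirf A (\<lambda>q. gm G q (covd G B Y q) (W q) + gm G q (Y q) (covd G B W q)) p"
      by (rule dirf_cong[OF sm_dirf[OF B gs] p]) (simp add: g_def metric_compat[OF B Y W])
    also have "\<dots> = dirf A (\<lambda>q. gm G q (covd G B Y q) (W q)) p + dirf A (\<lambda>q. gm G q (Y q) (covd G B W q)) p"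
      by (rule dirf_add[OF sm_gm sm_gm p]) (auto intro: vsm_covd B Y W)
    also have "\<dots> = gm G p (covd G A (covd G B Y) p) (W p) + gm G p (covd G B Y p) (covd G A W p)
     + (gm G p (covd G A Y p) (covd G B W p) + gm G p (Y p) (covd G A (covd G B W) p))"
      using metric_compat[OF A vsm_covd[OF B Y] W p] metric_compat[OF A Y vsm_covd[OF B W] p] by simp
    finally show ?thesis by simp
  qed
  have L: "dirf (lie X Z) g p = gm G p (covd G (lie X Z) Y p) (W p) + gm G p (Y p) (covd G (lie X Z) W p)"
    unfolding g_def using metric_compat[OF vsm_lie[OF X Z] Y W p] .
  have C: "dirf X (dirf Z g) p - dirf Z (dirf X g) p = dirf (lie X Z) g p"
    by (rule dirf_comm[OF X Z gs p])
  have s1: "gm G p (covd G Z Y p) (covd G X W p) = gm G p (covd G Z Y p) (covd G X W p)" ..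
  show ?thesis
    using C two[OF X Z] two[OF Z X] L
    unfolding rmvec_def by (simp add: gm_lin)
qed

lemma bianchi_const:
  assumes p: "p \<in> U"
  shows "rmvec G (\<lambda>q. a) (\<lambda>q. b) (\<lambda>q. c) p + rmvec G (\<lambda>q. b) (\<lambda>q. c) (\<lambda>q. a) p + rmvec G (\<lambda>q. c) (\<lambda>q. a) (\<lambda>q. b) p = 0"
proof -
  have sw: "covd G (\<lambda>q. x) (covd G (\<lambda>q. y) (\<lambda>q. z)) p = covd G (\<lambda>q. x) (covd G (\<lambda>q. z) (\<lambda>q. y)) p" for x y z
  proof (rule covd_cong[OF vsm_covd[OF vsm_const vsm_const] p])
    fix q assume q: "q \<in> U"
    show "covd G (\<lambda>q. y) (\<lambda>q. z) q = covd G (\<lambda>q. z) (\<lambda>q. y) q"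
      using torsion[OF q, of "\<lambda>q. y" "\<lambda>q. z"] lie_const[of y z q] by simp
  qed
  show ?thesis unfolding rmvec_def
    using sw[of a b c] sw[of b c a] sw[of c a b]
    by (simp add: covd_X0 lie_const)
qed

definition R4 :: "real^'n \<Rightarrow> 'n \<Rightarrow> 'n \<Rightarrow> 'n \<Rightarrow> 'n \<Rightarrow> real" where
  "R4 p i a j b = Rm G (\<lambda>q. axis i 1) (\<lambda>q. axis a 1) (\<lambda>q. axis j 1) p (axis b 1)"

lemma R4_pair: "p \<in> U \<Longrightarrow> R4 p i a j b = R4 p j b i a"
proof (rule pair_sym_alg[where R = "R4 p"])
  assume p: "p \<in> U"
  show "R4 p i a j b = - R4 p a i j b" for i a j b
    unfolding R4_def Rm_def using rmvec_antisym[of "\<lambda>q. axis i 1" "\<lambda>q. axis a 1"] by (simp add: gm_lin)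
  show "R4 p i a j b = - R4 p i a b j" for i a j b
    unfolding R4_def Rm_def
    using rm_metric[OF vsm_const vsm_const vsm_const vsm_const p, of "axis i 1" "axis a 1" "axis j 1" "axis b 1"]
      gm_sym[OF p, of "axis j 1"] by simp
  show "R4 p i a j b + R4 p a j i b + R4 p j i a b = 0" for i a j b
    unfolding R4_def Rm_def
    using arg_cong[OF bianchi_const[OF p, of "axis i 1" "axis a 1" "axis j 1"], of "\<lambda>v. gm G p v (axis b 1)"]
    by (simp add: gm_def inner_add_left)
qed

lemma Ric_sym: "p \<in> U \<Longrightarrow> Ric G a b p = Ric G b a p"
proof -
  assume p: "p \<in> U"
  have "Ric G b a p = (\<Sum>i\<in>UNIV. \<Sum>j\<in>UNIV. Gi G p $ i $ j * R4 p j a i b)"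
    unfolding Ric_def R4_def[symmetric] by (simp add: R4_pair[OF p, of _ b _ a])
  also have "\<dots> = (\<Sum>j\<in>UNIV. \<Sum>i\<in>UNIV. Gi G p $ i $ j * R4 p j a i b)" by (rule sum.swap)
  also have "\<dots> = Ric G a b p"
    unfolding Ric_def R4_def[symmetric] using Gi_sym[OF p] by simp
  finally show ?thesis by simp
qed

end


lemma vsm_uminus: "vsm U A \<Longrightarrow> open U \<Longrightarrow> vsm U (\<lambda>q. - A q)"
  unfolding vsm_def by (simp add: smooth_uminus)

lemma smooth_divc: "open U \<Longrightarrow> smooth_on U f \<Longrightarrow> smooth_on U (\<lambda>x. f x / c :: real)"
proof -
  assume "open U" "smooth_on U f"
  then have "smooth_on U (\<lambda>x. f x * (1 / c))" using smooth_mult[of U f "\<lambda>x. 1 / c"] smooth_const by blast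
  then show ?thesis by simp
qed

lemma mv_inner: "(A *v x) \<bullet> y = x \<bullet> (transpose A *v (y::real^'n::finite))"
proof -
  have "(A *v x) \<bullet> y = (x v* transpose A) \<bullet> y" by simp
  also have "\<dots> = x \<bullet> (transpose A *v y)" by (rule dot_lmul_matrix)
  finally show ?thesis .
qed

context geo
begin

lemma Gi_tr: "q \<in> U \<Longrightarrow> transpose (Gi G q) = Gi G q"
  using Gi_sym by (simp add: vec_eq_iff transpose_def)

lemma gm_sharpv: "q \<in> U \<Longrightarrow> gm G q (Gi G q *v c) y = c \<bullet> y"
  unfolding gm_def mv_inner by (simp add: Gi_tr matrix_vector_mul_assoc GGi)

lemma gm_sharp: "q \<in> U \<Longrightarrow> gm G q (sharp G q f) (axis b 1) = f (axis b 1)"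
  unfolding sharp_def by (simp add: gm_sharpv inner_axis)

lemma Gi_inner_sym: "q \<in> U \<Longrightarrow> x \<bullet> (Gi G q *v y) = y \<bullet> (Gi G q *v x)"
  by (metis Gi_tr inner_commute mv_inner)

lemma vsm_rmvec: "vsm U X \<Longrightarrow> vsm U Z \<Longrightarrow> vsm U Y \<Longrightarrow> vsm U (rmvec G X Z Y)"
  unfolding rmvec_def[abs_def]
  by (intro vsm_add vsm_uminus[OF _ U] vsm_covd vsm_lie)

lemma Ric_sm: "smooth_on U (Ric G a b)"
  unfolding Ric_def[abs_def] Rm_def
  by (intro smooth_sum[OF U] smooth_mult[OF U] Gi_sm sm_gm vsm_rmvec vsm_const)

lemma scal_sm: "smooth_on U (scal G)"
  unfolding scal_def[abs_def]
  by (intro smooth_sum[OF U] smooth_mult[OF U] Gi_sm Ric_sm)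

lemma hess_sm: "smooth_on U f \<Longrightarrow> smooth_on U (hess G f a b)"
  unfolding hess_def[abs_def]
  by (intro smooth_minus[OF U] smooth_sum[OF U] smooth_mult[OF U] smooth_pd chr_sm)

lemma lap_sm: "smooth_on U f \<Longrightarrow> smooth_on U (lap G f)"
  unfolding lap_def[abs_def]
  by (intro smooth_sum[OF U] smooth_mult[OF U] Gi_sm hess_sm)

lemma gradsq_sm: "smooth_on U f \<Longrightarrow> smooth_on U (gradsq G f)"
  unfolding gradsq_def[abs_def]
  by (intro smooth_sum[OF U] smooth_mult[OF U] Gi_sm smooth_pd)

lemma hess_sym: "smooth_on U f \<Longrightarrow> p \<in> U \<Longrightarrow> hess G f a b p = hess G f b a p"
  unfolding hess_def using pd_comm[OF U] chr_sym by simp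

end

locale scms = geo U G for U :: "(real^'n::finite) set" and G +
  fixes v :: "real^'n \<Rightarrow> real" and m mu :: real
  assumes v_sm: "smooth_on U v" and v_pos: "\<forall>q\<in>U. v q > 0"
begin

lemma v_nz: "\<forall>q\<in>U. v q \<noteq> 0" using v_pos by auto
lemma v2_nz: "\<forall>q\<in>U. (v q)^2 \<noteq> 0" using v_pos by auto

lemma Ricm_sm: "smooth_on U (Ricm G v m a b)"
  unfolding Ricm_def[abs_def]
  by (intro smooth_minus[OF U] smooth_mult[OF U] smooth_divide[OF U] v_nz smooth_const v_sm Ric_sm hess_sm)

lemma Rscm_sm: "smooth_on U (Rscm G v m)"
  unfolding Rscm_def[abs_def]
  by (intro smooth_minus[OF U] smooth_mult[OF U] smooth_divide[OF U] v_nz v2_nz smooth_const v_sm scal_sm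
      lap_sm gradsq_sm smooth_power[OF U])

lemma JW_sm: "smooth_on U (JW G v m mu)"
  unfolding JW_def[abs_def]
  by (intro smooth_divc[OF U] smooth_divide[OF U] smooth_add[OF U] Rscm_sm v2_nz smooth_power[OF U] v_sm smooth_const)

lemma PWc_sm: "smooth_on U (PWc G v m mu a b)"
  unfolding PWc_def[abs_def]
  by (intro smooth_divc[OF U] smooth_minus[OF U] smooth_mult[OF U] Ricm_sm JW_sm Gc_sm smooth_const)

lemma PWc_sym: "p \<in> U \<Longrightarrow> PWc G v m mu a b p = PWc G v m mu b a p"
  unfolding PWc_def Ricm_def using Ric_sym hess_sym[OF v_sm] Gsym by simp

lemma PW_bil: "PW G v m mu q x y = bil (PWc G v m mu) q x y"
  unfolding PW_def bil_def by simp

lemma PW_sym: "q \<in> U \<Longrightarrow> PW G v m mu q x y = PW G v m mu q y x"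
  unfolding PW_def by (subst sum.swap) (simp add: PWc_sym mult_ac)


definition cv :: "real^'n \<Rightarrow> real^'n \<Rightarrow> real^'n" where
  "cv q x = (\<chi> b. PW G v m mu q x (axis b 1))"

lemma PW_dot: "PW G v m mu q x y = cv q x \<bullet> y"
  unfolding cv_def PW_def inner_vec_def
  by (simp add: axis_def dsimps sum_distrib_left sum_distrib_right mult_ac, subst sum.swap, simp add: mult_ac)

lemma PWvec_cv: "PWvec G v m mu q x = Gi G q *v cv q x"
  unfolding PWvec_def sharp_def cv_def ..

lemma gm_PWvec: "q \<in> U \<Longrightarrow> gm G q (PWvec G v m mu q x) y = PW G v m mu q x y"
  unfolding PWvec_cv by (simp add: gm_sharpv PW_dot)

lemma PW_PWvec_sym: "q \<in> U \<Longrightarrow> PW G v m mu q x (PWvec G v m mu q z) = PW G v m mu q z (PWvec G v m mu q x)"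
  unfolding PWvec_cv PW_dot using Gi_inner_sym by blast

lemma vsm_PWvec: "vsm U Z \<Longrightarrow> vsm U (\<lambda>q. PWvec G v m mu q (Z q))"
  unfolding vsm_def PWvec_cv cv_def matrix_vector_mult_def PW_bil
  by (simp, intro allI smooth_sum[OF U] smooth_mult[OF U] Gi_sm sm_bil PWc_sm vsm_const) (simp add: vsm_def)

lemma PW_lin1: "PW G v m mu q (x + y) z = PW G v m mu q x z + PW G v m mu q y z"
  "PW G v m mu q (c *\<^sub>R x) z = c * PW G v m mu q x z"
  "PW G v m mu q (x - y) z = PW G v m mu q x z - PW G v m mu q y z"
  unfolding PW_dot cv_def PW_def by (simp_all add: inner_vec_def algebra_simps sum.distrib sum_distrib_left sum_subtractf)

lemma PW_lin2: "PW G v m mu q z (x + y) = PW G v m mu q z x + PW G v m mu q z y"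
  "PW G v m mu q z (c *\<^sub>R x) = c * PW G v m mu q z x"
  "PW G v m mu q z (x - y) = PW G v m mu q z x - PW G v m mu q z y"
  unfolding PW_dot by (simp_all add: inner_add_right inner_diff_right)

end


lemma tparts:
  "ttop (tadd I J) p = ttop I p + ttop J p" "tmid (tadd I J) p = tmid I p + tmid J p" "tbot (tadd I J) p = tbot I p + tbot J p"
  "ttop (tneg I) p = - ttop I p" "tmid (tneg I) p = - tmid I p" "tbot (tneg I) p = - tbot I p"
  unfolding tadd_def tneg_def ttop_def tmid_def tbot_def by simp_all

locale tsetup = scms U G v m mu for U :: "(real^'n::finite) set" and G v m mu +
  fixes sg rh :: "real^'n \<Rightarrow> real" and om :: "real^'n \<Rightarrow> real^'n" and p :: "real^'n"
  assumes sg: "smooth_on U sg" and rh: "smooth_on U rh" and om: "vsm U om" and p: "p \<in> U"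
begin

abbreviation "nW \<equiv> nablaW G v m mu"
abbreviation "I0 \<equiv> (sg, om, rh)"
abbreviation "PWp \<equiv> PW G v m mu"
abbreviation "PWv \<equiv> PWvec G v m mu"

definition S3 :: "real^'n \<Rightarrow> real^'n \<Rightarrow> real^'n \<Rightarrow> real" where
  "S3 x z w = (\<Sum>i\<in>UNIV. \<Sum>j\<in>UNIV. \<Sum>k\<in>UNIV. x $ i * z $ j * w $ k * covT G (PWc G v m mu) i j k p)"

lemma covPWc_eq: "covPWc G v m mu i j k q = covT G (PWc G v m mu) i j k q"
  unfolding covPWc_def covT_def ..

lemma dPW_split: "dPW G v m mu p x z w = S3 x z w - S3 z x w"
proof -
  have "S3 z x w = (\<Sum>j\<in>UNIV. \<Sum>i\<in>UNIV. \<Sum>k\<in>UNIV. x $ i * z $ j * w $ k * covT G (PWc G v m mu) j i k p)"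
    unfolding S3_def by (simp add: mult_ac)
  also have "\<dots> = (\<Sum>i\<in>UNIV. \<Sum>j\<in>UNIV. \<Sum>k\<in>UNIV. x $ i * z $ j * w $ k * covT G (PWc G v m mu) j i k p)"
    by (rule sum.swap)
  finally have e: "S3 z x w = \<dots>" .
  have "dPW G v m mu p x z w = (\<Sum>i\<in>UNIV. \<Sum>j\<in>UNIV. \<Sum>k\<in>UNIV. x $ i * z $ j * w $ k * covT G (PWc G v m mu) i j k p
      - x $ i * z $ j * w $ k * covT G (PWc G v m mu) j i k p)"
    unfolding dPW_def covPWc_eq by (simp add: right_diff_distrib)
  also have "\<dots> = S3 x z w - S3 z x w" by (simp only: e) (simp add: S3_def sum_subtractf)
  finally show ?thesis .
qed

lemma PW_sm: "vsm U A \<Longrightarrow> vsm U B \<Longrightarrow> smooth_on U (\<lambda>q. PWp q (A q) (B q))"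
  unfolding PW_bil by (rule sm_bil[OF PWc_sm])

lemma PW_tensor: "vsm U X \<Longrightarrow> vsm U A \<Longrightarrow> vsm U B \<Longrightarrow>
   dirf X (\<lambda>q. PWp q (A q) (B q)) p = S3 (X p) (A p) (B p) + PWp p (covd G X A p) (B p) + PWp p (A p) (covd G X B p)"
  unfolding PW_bil S3_def using tensor_rule[OF _ _ _ PWc_sm p] by simp

lemma L_PWvec: "vsm U X \<Longrightarrow> vsm U Z \<Longrightarrow>
  gm G p (covd G X (\<lambda>q. PWv q (Z q)) p) (axis b 1) = S3 (X p) (Z p) (axis b 1) + PWp p (covd G X Z p) (axis b 1)"
proof -
  assume X: "vsm U X" and Z: "vsm U Z"
  have "dirf X (\<lambda>q. gm G q (PWv q (Z q)) (axis b 1)) p = dirf X (\<lambda>q. PWp q (Z q) (axis b 1)) p"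
    by (rule dirf_cong[OF sm_gm[OF vsm_PWvec[OF Z] vsm_const] p]) (simp add: gm_PWvec)
  moreover have "dirf X (\<lambda>q. gm G q (PWv q (Z q)) (axis b 1)) p =
      gm G p (covd G X (\<lambda>q. PWv q (Z q)) p) (axis b 1) + gm G p (PWv p (Z p)) (covd G X (\<lambda>q. axis b 1) p)"
    using metric_compat[OF X vsm_PWvec[OF Z] vsm_const p] by simp
  moreover have "dirf X (\<lambda>q. PWp q (Z q) (axis b 1)) p = S3 (X p) (Z p) (axis b 1) + PWp p (covd G X Z p) (axis b 1)
      + PWp p (Z p) (covd G X (\<lambda>q. axis b 1) p)"
    using PW_tensor[OF X Z vsm_const] by simp
  ultimately show ?thesis using gm_PWvec[OF p] by simp
qed

lemma top_XZ:
  assumes A: "vsm U A" and B: "vsm U B"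
  shows "ttop (nW A (nW B I0)) p = dirf A (dirf B sg) p - gm G p (covd G A om p) (B p) - gm G p (om p) (covd G A B p)
     - gm G p (covd G B om p) (A p) - sg p * PWp p (B p) (A p) - rh p * gm G p (B p) (A p)"
proof -
  have "dirf A (\<lambda>q. dirf B sg q - gm G q (om q) (B q)) p = dirf A (dirf B sg) p - dirf A (\<lambda>q. gm G q (om q) (B q)) p"
    by (rule dirf_minus[OF sm_dirf[OF B sg] sm_gm[OF om B] p])
  then show ?thesis
    unfolding nablaW_def ttop_def tmid_def tbot_def
    using metric_compat[OF A om B p] by (simp add: gm_lin gm_PWvec[OF p])
qed

lemma top_lie: "vsm U A \<Longrightarrow> ttop (nW A I0) p = dirf A sg p - gm G p (om p) (A p)"
  unfolding nablaW_def ttop_def tmid_def tbot_def by simp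


lemma top_final: "vsm U X \<Longrightarrow> vsm U Z \<Longrightarrow> ttop (curvW G v m mu X Z I0) p = 0"
proof -
  assume X: "vsm U X" and Z: "vsm U Z"
  have tor: "lie X Z p = covd G X Z p - covd G Z X p" using torsion[OF p] by simp
  show ?thesis
    unfolding curvW_def tparts
    using top_XZ[OF X Z] top_XZ[OF Z X] top_lie[OF vsm_lie[OF X Z]] dirf_comm[OF X Z sg p]
      gm_sym[OF p, of "X p" "Z p"] PW_sym[OF p, of "X p" "Z p"] gm_sym[OF p, of "covd G X om p" "Z p"]
      gm_sym[OF p, of "covd G Z om p" "X p"]
    unfolding tor by (simp add: gm_lin)
qed


lemma bot_XZ:
  assumes A: "vsm U A" and B: "vsm U B"
  shows "tbot (nW A (nW B I0)) p = dirf A (dirf B rh) p - (S3 (A p) (B p) (om p) + PWp p (covd G A B p) (om p) + PWp p (B p) (covd G A om p))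
     - PWp p (A p) (covd G B om p) - sg p * PWp p (A p) (PWv p (B p)) - rh p * PWp p (A p) (B p)"
proof -
  have "dirf A (\<lambda>q. dirf B rh q - PWp q (B q) (om q)) p = dirf A (dirf B rh) p - dirf A (\<lambda>q. PWp q (B q) (om q)) p"
    by (rule dirf_minus[OF sm_dirf[OF B rh] PW_sm[OF B om] p])
  then show ?thesis
    unfolding nablaW_def ttop_def tmid_def tbot_def
    using PW_tensor[OF A B om] by (simp add: PW_lin2)
qed

lemma bot_lie: "tbot (nW A I0) p = dirf A rh p - PWp p (A p) (om p)"
  unfolding nablaW_def ttop_def tmid_def tbot_def by simp

lemma bot_final: "vsm U X \<Longrightarrow> vsm U Z \<Longrightarrow> tbot (curvW G v m mu X Z I0) p = dPW G v m mu p (X p) (Z p) (om p)"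
proof -
  assume X: "vsm U X" and Z: "vsm U Z"
  have tor: "lie X Z p = covd G X Z p - covd G Z X p" using torsion[OF p] by simp
  show ?thesis
    unfolding curvW_def tparts dPW_split
    using bot_XZ[OF X Z] bot_XZ[OF Z X] bot_lie[of "lie X Z"] dirf_comm[OF X Z rh p]
      PW_sym[OF p, of "X p" "Z p"] PW_PWvec_sym[OF p, of "X p" "Z p"]
    unfolding tor by (simp add: PW_lin1)
qed


lemma gm_expand2: "gm G q x y = (\<Sum>b\<in>UNIV. y $ b * gm G q x (axis b 1))"
  unfolding gm_bil bil_def
  by (simp add: axis_def dsimps sum_distrib_left sum_distrib_right mult_ac, subst sum.swap, simp add: mult_ac)

lemma gm_inj: "(\<And>b. gm G p x (axis b 1) = gm G p y (axis b 1)) \<Longrightarrow> x = y"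
proof (rule ccontr)
  assume e: "\<And>b. gm G p x (axis b 1) = gm G p y (axis b 1)" and ne: "x \<noteq> y"
  have "gm G p (x - y) (x - y) = 0"
    using e by (subst gm_expand2) (simp add: gm_lin)
  moreover have "gm G p (x - y) (x - y) > 0" using Gpos[OF p] ne unfolding gm_def by simp
  ultimately show False by simp
qed

lemma mid_XZ:
  assumes A: "vsm U A" and B: "vsm U B"
  shows "gm G p (tmid (nW A (nW B I0)) p) (axis b 1) =
    gm G p (covd G A (covd G B om) p) (axis b 1) + dirf A sg p * PWp p (B p) (axis b 1)
    + sg p * (S3 (A p) (B p) (axis b 1) + PWp p (covd G A B p) (axis b 1))
    + dirf A rh p * gm G p (B p) (axis b 1) + rh p * gm G p (covd G A B p) (axis b 1)
    + (dirf B sg p - gm G p (om p) (B p)) * PWp p (A p) (axis b 1)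
    + (dirf B rh p - PWp p (B p) (om p)) * gm G p (A p) (axis b 1)"
proof -
  have v1: "vsm U (covd G B om)" by (rule vsm_covd[OF B om])
  have v2: "vsm U (\<lambda>q. sg q *\<^sub>R PWv q (B q))" by (rule vsm_scale[OF sg vsm_PWvec[OF B]])
  have v3: "vsm U (\<lambda>q. rh q *\<^sub>R B q)" by (rule vsm_scale[OF rh B])
  have "covd G A (\<lambda>q. covd G B om q + sg q *\<^sub>R PWv q (B q) + rh q *\<^sub>R B q) p
      = covd G A (\<lambda>q. covd G B om q + sg q *\<^sub>R PWv q (B q)) p + covd G A (\<lambda>q. rh q *\<^sub>R B q) p"
    by (rule covd_add[OF vsm_add[OF v1 v2] v3 p])
  also have "\<dots> = covd G A (covd G B om) p + covd G A (\<lambda>q. sg q *\<^sub>R PWv q (B q)) p + covd G A (\<lambda>q. rh q *\<^sub>R B q) p"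
    using covd_add[OF v1 v2 p] by simp
  also have "\<dots> = covd G A (covd G B om) p + (dirf A sg p *\<^sub>R PWv p (B p) + sg p *\<^sub>R covd G A (\<lambda>q. PWv q (B q)) p)
      + (dirf A rh p *\<^sub>R B p + rh p *\<^sub>R covd G A B p)"
    using covd_scale[OF sg vsm_PWvec[OF B] p] covd_scale[OF rh B p] by simp
  finally have c: "covd G A (\<lambda>q. covd G B om q + sg q *\<^sub>R PWv q (B q) + rh q *\<^sub>R B q) p = \<dots>" .
  show ?thesis
    unfolding nablaW_def ttop_def tmid_def tbot_def
    using c L_PWvec[OF A B, of b] gm_PWvec[OF p]
    by (simp add: gm_lin algebra_simps)
qed

lemma mid_lie: "gm G p (tmid (nW A I0) p) (axis b 1) = gm G p (covd G A om p) (axis b 1) + sg p * PWp p (A p) (axis b 1) + rh p * gm G p (A p) (axis b 1)"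
  unfolding nablaW_def ttop_def tmid_def tbot_def by (simp add: gm_lin gm_PWvec[OF p])

lemma mid_final: "vsm U X \<Longrightarrow> vsm U Z \<Longrightarrow> tmid (curvW G v m mu X Z I0) p =
   sharp G p (\<lambda>w. AW G v m mu X Z om p w - sg p * dPW G v m mu p (X p) (Z p) w)"
proof (rule gm_inj)
  fix b
  assume X: "vsm U X" and Z: "vsm U Z"
  have tor: "lie X Z p = covd G X Z p - covd G Z X p" using torsion[OF p] by simp
  show "gm G p (tmid (curvW G v m mu X Z I0) p) (axis b 1) =
      gm G p (sharp G p (\<lambda>w. AW G v m mu X Z om p w - sg p * dPW G v m mu p (X p) (Z p) w)) (axis b 1)"
    unfolding curvW_def tparts gm_sharp[OF p] AW_def Rm_def KN_PW_g_def rmvec_def dPW_split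
    using mid_XZ[OF X Z, of b] mid_XZ[OF Z X, of b] mid_lie[of "lie X Z" b]
      gm_sym[OF p, of "om p" "X p"] gm_sym[OF p, of "om p" "Z p"]
    unfolding tor by (simp add: gm_lin PW_lin1 algebra_simps)
qed

end


theorem proposition6p4:
  fixes U :: "(real^'n::finite) set"
    and G :: "real^'n \<Rightarrow> real^'n^'n"
    and v :: "real^'n \<Rightarrow> real"
    and m mu :: real
    and X Z :: "real^'n \<Rightarrow> real^'n"
    and sigma rho :: "real^'n \<Rightarrow> real"
    and omega :: "real^'n \<Rightarrow> real^'n"
    and p :: "real^'n"
  assumes "open U"
    and "CARD('n) \<ge> 3"
    and "m \<noteq> - real CARD('n)" and "m \<noteq> 1 - real CARD('n)" and "m \<noteq> 2 - real CARD('n)"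
    and "riemannian_metric_on U G"
    and "smooth_on U v" and "\<forall>q\<in>U. v q > 0"
    and "smooth_on U X" and "smooth_on U Z"
    and "smooth_on U sigma" and "smooth_on U omega" and "smooth_on U rho"
    and "p \<in> U"
  shows "ttop (curvW G v m mu X Z (sigma, omega, rho)) p = 0 \<and>
         tmid (curvW G v m mu X Z (sigma, omega, rho)) p =
           sharp G p (\<lambda>w. AW G v m mu X Z omega p w - sigma p * dPW G v m mu p (X p) (Z p) w) \<and>
         tbot (curvW G v m mu X Z (sigma, omega, rho)) p = dPW G v m mu p (X p) (Z p) (omega p)"
  proof -
  interpret tsetup U G v m mu sigma rho omega p
    by unfold_locales (use assms vsm_smooth in auto)
  have X: "vsm U X" by (rule vsm_smooth[OF assms(1) assms(9)])
  have Z: "vsm U Z" by (rule vsm_smooth[OF assms(1) assms(10)])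
  show ?thesis using top_final[OF X Z] mid_final[OF X Z] bot_final[OF X Z] by simp
qed

end
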